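(* For every $n\ge 4$, with $m=\lfloor (n-3)/4\rfloor$, the following set $Z$ of $(m+1)^2$ pyramidal tours yields pairwise adjacent vertices of $\mathrm{PYR}(n)$: for each pair $(q,s)$ with $0\le q,s\le m$, let $x=x_{q,s}$ be the pyramidal tour whose code satisfies $x^c_{2i+1}=1$, $x^c_{2i+2}=0$ for $1\le i\le q$; $x^c_{4m-2j+3}=0$, $x^c_{4m-2j+4}=1$ for $1\le j\le s$; $x^c_k=1$ for all $k$ with $4m+3\le k\le n-1$; and all remaining coordinates of $x^c$ equal to $0$. Consequently $\omega(\mathrm{PYR}(n))\ge \left(\lfloor (n-3)/4\rfloor+1\right)^2$.
   Context: Let $K_n$ be the complete undirected graph on vertex set $\{1,\dots,n\}$ with edge set $E$. A Hamiltonian cycle $\langle 1,i_1,\dots,i_r,n,j_1,\dots,j_{n-r-2}\rangle$ is called a pyramidal tour if $i_1<i_2<\dots<i_r$ and $j_1>j_2>\dots>j_{n-r-2}$; tours are undirected. Let $PT_n$ be the set of all pyramidal tours. For $x\in PT_n$ its characteristic vector $x^v\in\mathbb{R}^E$ has $x^v_e=1$ if edge $e$ lies in $x$ and $0$ otherwise. The pyramidal tours polytope is $\mathrm{PYR}(n)=\operatorname{conv}\{x^v : x\in PT_n\}$. Every pyramidal tour contains the edge $\{1,2\}$; the tour is oriented so that vertex $2$ belongs to the increasing part. The code of $x$ is the $0/1$ vector $x^c=(x^c_3,\dots,x^c_{n-1})$ (indexed by $3,\dots,n-1$) with $x^c_i=1$ if vertex $i$ is visited in the increasing part of $x$ and $x^c_i=0$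 otherwise; $x\mapsto x^c$ is a bijection from $PT_n$ onto $\{0,1\}^{n-3}$. The skeleton of a polytope is the graph on its vertices whose edges are its one-dimensional faces; $\omega(\mathrm{PYR}(n))$ is the clique number of the skeleton of $\mathrm{PYR}(n)$. *)

theory Defs
  imports "HOL-Analysis.Analysis" "HOL-Library.Function_Algebras"
begin

instantiation "fun" :: (type, real_vector) real_vector
begin
definition scaleR_fun :: "real \<Rightarrow> ('a \<Rightarrow> 'b) \<Rightarrow> 'a \<Rightarrow> 'b" where
  "scaleR_fun r f = (\<lambda>x. r *\<^sub>R f x)"
instance
  by standard (auto simp: scaleR_fun_def fun_eq_iff scaleR_add_right scaleR_add_left)
end

definition Kn_edges :: "nat \<Rightarrow> nat set set" where
  "Kn_edges n = {{i, j} | i j. i \<in> {1..n} \<and> j \<in> {1..n} \<and> i \<noteq> j}"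

definition cycle_edges :: "nat list \<Rightarrow> nat set set" where
  "cycle_edges xs = {{xs ! k, xs ! ((k + 1) mod length xs)} | k. k < length xs}"

definition pyramidal_seq :: "nat \<Rightarrow> nat list \<Rightarrow> bool" where
  "pyramidal_seq n xs \<longleftrightarrow> distinct xs \<and> set xs = {1..n} \<and>
     (\<exists>is js. xs = 1 # is @ n # js \<and> sorted_wrt (<) is \<and> sorted_wrt (>) js)"

definition PT :: "nat \<Rightarrow> nat set set set" where
  "PT n = {cycle_edges xs | xs. pyramidal_seq n xs}"

text \<open>Characteristic vector in R^E (coordinates outside E are 0).\<close>
definition charvec :: "nat set set \<Rightarrow> (nat set \<Rightarrow> real)" where
  "charvec T = (\<lambda>e. if e \<in> T then 1 else 0)"

definition PYR :: "nat \<Rightarrow> (nat set \<Rightarrow> real) set" where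
  "PYR n = convex hull (charvec ` PT n)"

text \<open>The pyramidal tour with code c (c i = True iff vertex i, 3 <= i <= n-1, lies in the
  increasing part; the tour is oriented so that 2 is in the increasing part).\<close>
definition tour_of_code :: "nat \<Rightarrow> (nat \<Rightarrow> bool) \<Rightarrow> nat set set" where
  "tour_of_code n c = cycle_edges
     (1 # (2 # filter c [3..<n]) @ n # rev (filter (\<lambda>i. \<not> c i) [3..<n]))"

definition vertices_of :: "'a::real_vector set \<Rightarrow> 'a set" where
  "vertices_of P = {v. v extreme_point_of P}"

definition skel_adjacent :: "'a::real_vector set \<Rightarrow> 'a \<Rightarrow> 'a \<Rightarrow> bool" where
  "skel_adjacent P u v \<longleftrightarrow> u \<in> vertices_of P \<and> v \<in> vertices_of P \<and> u \<noteq> v \<and>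
     closed_segment u v face_of P"

definition skel_clique :: "'a::real_vector set \<Rightarrow> 'a set \<Rightarrow> bool" where
  "skel_clique P C \<longleftrightarrow> C \<subseteq> vertices_of P \<and> (\<forall>u\<in>C. \<forall>v\<in>C. u \<noteq> v \<longrightarrow> skel_adjacent P u v)"

definition clique_number :: "'a::real_vector set \<Rightarrow> nat" where
  "clique_number P = Max {card C | C. finite C \<and> skel_clique P C}"

definition code_qs :: "nat \<Rightarrow> nat \<Rightarrow> nat \<Rightarrow> nat \<Rightarrow> bool" where
  "code_qs m q s k \<longleftrightarrow>
     (\<exists>i\<in>{1..q}. k = 2*i + 1) \<or> (\<exists>j\<in>{1..s}. k = 4*m + 4 - 2*j) \<or> 4*m + 3 \<le> k"

end

theory Submission
  imports Defs
begin

fun pe :: "nat list \<Rightarrow> nat set set" where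
  "pe [] = {}"
| "pe [x] = {}"
| "pe (x # y # zs) = insert {x, y} (pe (y # zs))"

lemma pe_nth: "pe xs = {{xs ! k, xs ! (k+1)} | k. k + 1 < length xs}"
proof (induction xs rule: pe.induct)
  case (3 x y zs)
  show ?case
  proof
    show "pe (x # y # zs) \<subseteq> {{(x # y # zs) ! k, (x # y # zs) ! (k + 1)} |k. k + 1 < length (x # y # zs)}"
    proof
      fix e assume "e \<in> pe (x # y # zs)"
      then have "e = {x,y} \<or> e \<in> pe (y # zs)" by simp
      then show "e \<in> {{(x # y # zs) ! k, (x # y # zs) ! (k + 1)} |k. k + 1 < length (x # y # zs)}"
      proof
        assume "e = {x,y}" then show ?thesis by (auto intro!: exI[of _ 0])
      next
        assume "e \<in> pe (y # zs)"
        then obtain k where "e = {(y#zs) ! k, (y#zs) ! (k+1)}" "k + 1 < length (y#zs)" using 3 by auto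
        then show ?thesis by (auto intro!: exI[of _ "Suc k"])
      qed
    qed
  next
    show "{{(x # y # zs) ! k, (x # y # zs) ! (k + 1)} |k. k + 1 < length (x # y # zs)} \<subseteq> pe (x # y # zs)"
    proof
      fix e assume "e \<in> {{(x # y # zs) ! k, (x # y # zs) ! (k + 1)} |k. k + 1 < length (x # y # zs)}"
      then obtain k where k: "e = {(x # y # zs) ! k, (x # y # zs) ! (k + 1)}" "k + 1 < length (x # y # zs)" by blast
      show "e \<in> pe (x # y # zs)"
      proof (cases k)
        case 0 then show ?thesis using k by simp
      next
        case (Suc j)
        then have "e \<in> pe (y # zs)" using 3 k by auto
        then show ?thesis by simp
      qed
    qed
  qed
qed auto

lemma cycle_edges_pe: "xs \<noteq> [] \<Longrightarrow> cycle_edges xs = pe xs \<union> {{last xs, hd xs}}"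
proof -
  assume ne: "xs \<noteq> []"
  have "cycle_edges xs = {{xs ! k, xs ! ((k + 1) mod length xs)} | k. k + 1 < length xs}
     \<union> {{xs ! k, xs ! ((k + 1) mod length xs)} | k. k = length xs - 1}" (is "_ = ?A \<union> ?B")
  proof
    show "cycle_edges xs \<subseteq> ?A \<union> ?B"
    proof
      fix e assume "e \<in> cycle_edges xs"
      then obtain k where k: "e = {xs ! k, xs ! ((k + 1) mod length xs)}" "k < length xs"
        unfolding cycle_edges_def by blast
      show "e \<in> ?A \<union> ?B"
      proof (cases "k + 1 < length xs")
        case True then show ?thesis using k by blast
      next
        case False then have "k = length xs - 1" using k by auto
        then show ?thesis using k by blast
      qed
    qed
  next
    have "?A \<subseteq> cycle_edges xs" unfolding cycle_edges_def by force
    moreover have "?B \<subseteq> cycle_edges xs" unfolding cycle_edges_def using ne by (auto intro!: exI[of _ "length xs - 1"])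
    ultimately show "?A \<union> ?B \<subseteq> cycle_edges xs" by blast
  qed
  also have "{{xs ! k, xs ! ((k + 1) mod length xs)} | k. k + 1 < length xs} = pe xs"
    unfolding pe_nth by (intro Collect_cong) auto
  also have "{{xs ! k, xs ! ((k + 1) mod length xs)} | k. k = length xs - 1} = {{last xs, hd xs}}"
    using ne by (auto simp: last_conv_nth hd_conv_nth)
  finally show ?thesis .
qed

lemma pe_append: "xs \<noteq> [] \<Longrightarrow> ys \<noteq> [] \<Longrightarrow> pe (xs @ ys) = pe xs \<union> pe ys \<union> {{last xs, hd ys}}"
proof (induction xs rule: pe.induct)
  case (2 x) then show ?case by (cases ys) auto
next
  case (3 x y zs) then show ?case by auto
qed auto

lemma pe_rev: "pe (rev xs) = pe xs"
proof (induction xs rule: pe.induct)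
  case (3 x y zs)
  have "pe (rev (x # y # zs)) = pe (rev (y # zs) @ [x])" by simp
  also have "\<dots> = pe (rev (y#zs)) \<union> {{y, x}}" by (subst pe_append) (auto simp: last_rev)
  finally show ?case using 3 by (auto simp: insert_commute)
qed auto

lemma pe_sorted: "sorted_wrt (<) L \<Longrightarrow>
  pe L = {{a,b} | a b. a \<in> set L \<and> b \<in> set L \<and> a < b \<and> (\<forall>z\<in>set L. \<not>(a<z \<and> z<b))}"
proof (induction L rule: pe.induct)
  case (3 x y zs)
  let ?S = "\<lambda>L. {{a,b} | a b. a \<in> set L \<and> b \<in> set L \<and> a < b \<and> (\<forall>z\<in>set L. \<not>(a<z \<and> z<b))}"
  have IH: "pe (y # zs) = ?S (y#zs)"
    using 3 by simp
  have s: "x < y" "\<forall>z\<in>set zs. y < z" "\<forall>z\<in>set zs. x < z" using "3.prems" by auto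
  show ?case
  proof
    show "pe (x # y # zs) \<subseteq> ?S (x#y#zs)"
    proof
      fix e assume "e \<in> pe (x # y # zs)"
      then have "e = {x,y} \<or> e \<in> pe (y # zs)" by simp
      then show "e \<in> ?S (x#y#zs)"
      proof
        assume e: "e = {x,y}"
        have "\<forall>z\<in>set (x#y#zs). \<not>(x<z \<and> z<y)" using s by auto
        then show ?thesis using e s(1) by (intro CollectI exI[of _ x] exI[of _ y]) simp
      next
        assume "e \<in> pe (y # zs)"
        then obtain a b where ab: "e = {a,b}" "a \<in> set (y#zs)" "b \<in> set (y#zs)" "a < b" "\<forall>z\<in>set (y#zs). \<not>(a<z \<and> z<b)"
          unfolding IH by blast
        have "x < a" using ab(2) s by auto
        then have "\<forall>z\<in>set (x#y#zs). \<not>(a<z \<and> z<b)" using ab(5) by simp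
        then show ?thesis using ab by (intro CollectI exI[of _ a] exI[of _ b]) simp
      qed
    qed
  next
    show "?S (x#y#zs) \<subseteq> pe (x # y # zs)"
    proof
      fix e assume "e \<in> ?S (x#y#zs)"
      then obtain a b where e: "e = {a,b}" "a \<in> set (x#y#zs)" "b \<in> set (x#y#zs)" "a < b" "\<forall>z\<in>set (x#y#zs). \<not>(a<z \<and> z<b)" by blast
      show "e \<in> pe (x # y # zs)"
      proof (cases "a = x")
        case True
        have "b = y"
        proof (rule ccontr)
          assume "b \<noteq> y"
          then have "b \<in> set zs" using e(3,4) True by auto
          then have "y < b" using s by auto
          then show False using e(5) True s(1) by auto
        qed
        then show ?thesis using e True by simp
      next
        case False
        then have a: "a \<in> set (y#zs)" using e(2) by simp
        then have "x < a \<or> x = a" using s by auto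
        then have "x < b" using e(4) False by auto
        then have b: "b \<in> set (y#zs)" using e(3) by auto
        have "\<forall>z\<in>set (y#zs). \<not>(a<z \<and> z<b)" using e(5) by simp
        then have "e \<in> pe (y # zs)" unfolding IH using e(1) a b e(4) by blast
        then show ?thesis by simp
      qed
    qed
  qed
qed auto


definition inS :: "nat \<Rightarrow> nat set \<Rightarrow> nat \<Rightarrow> bool" where
  "inS n I k \<longleftrightarrow> k = 1 \<or> k = n \<or> k \<in> I"

definition sideE :: "nat \<Rightarrow> nat set \<Rightarrow> nat set set" where
  "sideE n I = {{i,j} | i j. 1 \<le> i \<and> i < j \<and> j \<le> n \<and>
     ((inS n I i \<and> inS n I j \<and> (\<forall>k. i < k \<and> k < j \<longrightarrow> \<not> inS n I k)) \<or>
      (inS n (-I) i \<and> inS n (-I) j \<and> (\<forall>k. i < k \<and> k < j \<longrightarrow> \<not> inS n (-I) k)))}"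

lemma sideE_compl: "sideE n (-I) = sideE n I"
  unfolding sideE_def by auto

lemma sorted_lt_insert: "sorted_wrt (<) (1 # xs @ [n::nat])" if "sorted_wrt (<) xs" "set xs \<subseteq> {2..<n}" "1 < n"
  using that by (auto simp: sorted_wrt_append)

lemma cyc_sideE:
  assumes "sorted_wrt (<) is" "sorted_wrt (>) js" "set is \<union> set js = {2..<n}"
    "set is \<inter> set js = {}" "1 < n"
  shows "cycle_edges (1 # is @ n # js) = sideE n (set is)"
proof -
  let ?P1 = "pe (1 # is @ [n])" and ?P2 = "pe (1 # rev js @ [n])"
  have c1: "cycle_edges (1 # is @ n # js) = pe ((1 # is) @ (n # js)) \<union> {{last (n # js), 1}}"
    by (subst cycle_edges_pe) auto
  have c2: "pe ((1 # is) @ (n # js)) = pe (1 # is) \<union> pe (n # js) \<union> {{last (1#is), n}}"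
    using pe_append[of "1#is" "n#js"] by simp
  have c3: "pe (1 # is) \<union> {{last (1#is), n}} = ?P1"
    using pe_append[of "1#is" "[n]"] by auto
  have c4: "pe (n # js) \<union> {{last (n # js), 1}} = pe ((n # js) @ [1])"
    using pe_append[of "n#js" "[1]"] by auto
  have c5: "pe ((n # js) @ [1]) = ?P2"
    using pe_rev[of "(n # js) @ [1]"] by simp
  have cyc: "cycle_edges (1 # is @ n # js) = ?P1 \<union> ?P2"
    unfolding c1 c2 c3[symmetric] c5[symmetric] c4[symmetric] by blast
  have s1: "sorted_wrt (<) (1 # is @ [n])"
    by (rule sorted_lt_insert) (use assms in auto)
  have s2: "sorted_wrt (<) (1 # rev js @ [n])"
    by (rule sorted_lt_insert) (use assms in \<open>auto simp: sorted_wrt_rev\<close>)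
  let ?I = "set is"
  have isr: "\<And>k. k \<in> set is \<Longrightarrow> 2 \<le> k \<and> k < n" and jsr: "\<And>k. k \<in> set js \<Longrightarrow> 2 \<le> k \<and> k < n"
    using assms(3) by auto
  have part: "\<And>k. 2 \<le> k \<Longrightarrow> k < n \<Longrightarrow> k \<in> set is \<longleftrightarrow> k \<notin> set js" using assms(3,4) by auto
  show ?thesis unfolding cyc
  proof
    show "?P1 \<union> ?P2 \<subseteq> sideE n ?I"
    proof
      fix e assume "e \<in> ?P1 \<union> ?P2"
      then show "e \<in> sideE n ?I"
      proof
        assume "e \<in> ?P1"
        then obtain a b where e: "e = {a,b}" "a \<in> set (1 # is @ [n])" "b \<in> set (1 # is @ [n])" "a < b"
          "\<forall>z\<in>set (1 # is @ [n]). \<not>(a<z \<and> z<b)" unfolding pe_sorted[OF s1] by blast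
        have r: "1 \<le> a" "b \<le> n" using e(2,3) assms(5) by (auto dest!: isr)
        have "inS n ?I a" "inS n ?I b" using e(2,3) unfolding inS_def by auto
        moreover have "\<forall>k. a < k \<and> k < b \<longrightarrow> \<not> inS n ?I k"
          using e(5) r unfolding inS_def by auto
        ultimately show ?thesis unfolding sideE_def using e(1,4) r by blast
      next
        assume "e \<in> ?P2"
        then obtain a b where e: "e = {a,b}" "a \<in> set (1 # rev js @ [n])" "b \<in> set (1 # rev js @ [n])" "a < b"
          "\<forall>z\<in>set (1 # rev js @ [n]). \<not>(a<z \<and> z<b)" unfolding pe_sorted[OF s2] by blast
        have r: "1 \<le> a" "b \<le> n" using e(2,3) assms(5) by (auto dest!: jsr)
        have "inS n (-?I) a" "inS n (-?I) b" using e(2,3) assms(4) unfolding inS_def by auto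
        moreover have "\<forall>k. a < k \<and> k < b \<longrightarrow> \<not> inS n (-?I) k"
        proof (intro allI impI)
          fix k assume k: "a < k \<and> k < b"
          then have "2 \<le> k" "k < n" using r by auto
          moreover have "k \<notin> set js" using e(5) k by auto
          ultimately show "\<not> inS n (-?I) k" using part unfolding inS_def by auto
        qed
        ultimately show ?thesis unfolding sideE_def using e(1,4) r by blast
      qed
    qed
  next
    show "sideE n ?I \<subseteq> ?P1 \<union> ?P2"
    proof
      fix e assume "e \<in> sideE n ?I"
      then obtain a b where e: "e = {a,b}" "1 \<le> a" "a < b" "b \<le> n"
        "(inS n ?I a \<and> inS n ?I b \<and> (\<forall>k. a < k \<and> k < b \<longrightarrow> \<not> inS n ?I k)) \<or>
      (inS n (-?I) a \<and> inS n (-?I) b \<and> (\<forall>k. a < k \<and> k < b \<longrightarrow> \<not> inS n (-?I) k))"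
        unfolding sideE_def by blast
      from e(5) show "e \<in> ?P1 \<union> ?P2"
      proof
        assume h: "inS n ?I a \<and> inS n ?I b \<and> (\<forall>k. a < k \<and> k < b \<longrightarrow> \<not> inS n ?I k)"
        have "a \<in> set (1 # is @ [n])" "b \<in> set (1 # is @ [n])" using h unfolding inS_def by auto
        moreover have "\<forall>z\<in>set (1 # is @ [n]). \<not>(a<z \<and> z<b)" using h unfolding inS_def by auto
        ultimately have "e \<in> ?P1" unfolding pe_sorted[OF s1] using e(1,3) by blast
        then show ?thesis by blast
      next
        assume h: "inS n (-?I) a \<and> inS n (-?I) b \<and> (\<forall>k. a < k \<and> k < b \<longrightarrow> \<not> inS n (-?I) k)"
        have inj: "x \<in> set (1 # rev js @ [n])" if "inS n (-?I) x" "1 \<le> x" "x \<le> n" for x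
        proof (cases "x = 1 \<or> x = n")
          case True then show ?thesis by auto
        next
          case False
          then have "2 \<le> x" "x < n" "x \<notin> ?I" using that unfolding inS_def by auto
          then show ?thesis using part by auto
        qed
        have "a \<in> set (1 # rev js @ [n])" using h e(2,3,4) by (intro inj) auto
        moreover have "b \<in> set (1 # rev js @ [n])" using h e(2,3,4) by (intro inj) auto
        moreover have "\<forall>z\<in>set (1 # rev js @ [n]). \<not>(a<z \<and> z<b)"
        proof
          fix z assume z: "z \<in> set (1 # rev js @ [n])"
          show "\<not>(a<z \<and> z<b)"
          proof
            assume zz: "a<z \<and> z<b"
            then have "z \<in> set js" using z e(2,4) by auto
            then have "z \<notin> ?I" using assms(4) by auto
            then show False using h zz unfolding inS_def by auto
          qed
        qed
        ultimately have "e \<in> ?P2" unfolding pe_sorted[OF s2] using e(1,3) by blast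
        then show ?thesis by blast
      qed
    qed
  qed
qed


definition Xc :: "nat \<Rightarrow> (nat \<Rightarrow> bool) \<Rightarrow> nat set" where
  "Xc n c = insert 2 {k. 3 \<le> k \<and> k < n \<and> c k}"

lemma tour_sideE: assumes "n \<ge> 3" shows "tour_of_code n c = sideE n (Xc n c)"
proof -
  have "tour_of_code n c = cycle_edges (1 # (2 # filter c [3..<n]) @ n # rev (filter (\<lambda>i. \<not> c i) [3..<n]))"
    unfolding tour_of_code_def by simp
  also have "\<dots> = sideE n (set (2 # filter c [3..<n]))"
  proof (rule cyc_sideE)
    show "sorted_wrt (<) (2 # filter c [3..<n])"
      by (auto simp: sorted_wrt_filter)
    show "sorted_wrt (>) (rev (filter (\<lambda>i. \<not> c i) [3..<n]))"
      by (auto simp: sorted_wrt_rev sorted_wrt_filter)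
    show "set (2 # filter c [3..<n]) \<union> set (rev (filter (\<lambda>i. \<not> c i) [3..<n])) = {2..<n}"
      using assms by auto
    show "set (2 # filter c [3..<n]) \<inter> set (rev (filter (\<lambda>i. \<not> c i) [3..<n])) = {}"
      by auto
    show "1 < n" using assms by auto
  qed
  also have "set (2 # filter c [3..<n]) = Xc n c" unfolding Xc_def by auto
  finally show ?thesis .
qed

lemma tour_pyr: assumes "n \<ge> 3"
  shows "pyramidal_seq n (1 # (2 # filter c [3..<n]) @ n # rev (filter (\<lambda>i. \<not> c i) [3..<n]))"
  unfolding pyramidal_seq_def
proof (intro conjI exI)
  show "distinct (1 # (2 # filter c [3..<n]) @ n # rev (filter (\<lambda>i. \<not> c i) [3..<n]))"
    using assms by auto
  show "set (1 # (2 # filter c [3..<n]) @ n # rev (filter (\<lambda>i. \<not> c i) [3..<n])) = {1..n}"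
    using assms by auto
  show "sorted_wrt (<) (2 # filter c [3..<n])"
    by (auto simp: sorted_wrt_filter)
  show "sorted_wrt (>) (rev (filter (\<lambda>i. \<not> c i) [3..<n]))"
    by (auto simp: sorted_wrt_rev sorted_wrt_filter)
qed simp

lemma tour_in_PT: "n \<ge> 3 \<Longrightarrow> tour_of_code n c \<in> PT n"
  unfolding PT_def tour_of_code_def using tour_pyr by blast

lemma PT_sideE: assumes "T \<in> PT n" shows "\<exists>I. 2 \<in> I \<and> T = sideE n I"
proof -
  obtain xs where T: "T = cycle_edges xs" and p: "pyramidal_seq n xs" using assms unfolding PT_def by blast
  obtain "is" js where xs: "xs = 1 # is @ n # js" and s: "sorted_wrt (<) is" "sorted_wrt (>) js"
    and d: "distinct xs" and st: "set xs = {1..n}"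
    using p unfolding pyramidal_seq_def by blast
  have n1: "1 < n"
  proof -
    have "n \<in> set xs" using xs by simp
    then have "1 \<le> n" using st by auto
    moreover have "n \<noteq> 1" using d xs by auto
    ultimately show ?thesis by simp
  qed
  have u: "set is \<union> set js = {2..<n}"
  proof -
    have "insert 1 (insert n (set is \<union> set js)) = {1..n}" using st xs by auto
    moreover have "1 \<notin> set is \<union> set js" "n \<notin> set is \<union> set js" using d xs by auto
    ultimately show ?thesis
    proof -
      assume A: "insert 1 (insert n (set is \<union> set js)) = {1..n}" and B: "1 \<notin> set is \<union> set js" "n \<notin> set is \<union> set js"
      show ?thesis
      proof (rule set_eqI)
        fix x
        have "x \<in> set is \<union> set js \<longleftrightarrow> x \<in> {1..n} \<and> x \<noteq> 1 \<and> x \<noteq> n"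
          using B by (subst A[symmetric]) auto
        then show "x \<in> set is \<union> set js \<longleftrightarrow> x \<in> {2..<n}" by auto
      qed
    qed
  qed
  have di: "set is \<inter> set js = {}" using d xs by auto
  have T2: "T = sideE n (set is)" unfolding T xs by (rule cyc_sideE[OF s u di n1])
  show ?thesis
  proof (cases "2 \<in> set is")
    case True then show ?thesis using T2 by blast
  next
    case False then show ?thesis using T2 sideE_compl[of n "set is"] by (intro exI[of _ "- set is"]) auto
  qed
qed

lemma sideE_Kn: "sideE n I \<subseteq> Kn_edges n"
  unfolding sideE_def Kn_edges_def by fastforce


definition tt :: "nat set \<Rightarrow> nat \<Rightarrow> bool" where
  "tt I k \<longleftrightarrow> (k \<in> I) \<noteq> (Suc k \<in> I)"

lemma inS_int: "2 \<le> k \<Longrightarrow> k < n \<Longrightarrow> inS n I k \<longleftrightarrow> k \<in> I"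
  unfolding inS_def by auto

lemma inS_compl_int: "2 \<le> k \<Longrightarrow> k < n \<Longrightarrow> inS n (-I) k \<longleftrightarrow> k \<notin> I"
  unfolding inS_def by auto

lemma mem_sideE:
  assumes "1 \<le> i" "i < j" "j \<le> n"
  shows "{i,j} \<in> sideE n I \<longleftrightarrow>
     (inS n I i \<and> inS n I j \<and> (\<forall>k. i < k \<and> k < j \<longrightarrow> \<not> inS n I k)) \<or>
     (inS n (-I) i \<and> inS n (-I) j \<and> (\<forall>k. i < k \<and> k < j \<longrightarrow> \<not> inS n (-I) k))"
proof
  assume "{i,j} \<in> sideE n I"
  then obtain a b where ab: "{i,j} = {a,b}" "1 \<le> a" "a < b" "b \<le> n"
     "(inS n I a \<and> inS n I b \<and> (\<forall>k. a < k \<and> k < b \<longrightarrow> \<not> inS n I k)) \<or>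
      (inS n (-I) a \<and> inS n (-I) b \<and> (\<forall>k. a < k \<and> k < b \<longrightarrow> \<not> inS n (-I) k))"
    unfolding sideE_def by blast
  have "a = i \<and> b = j" using ab(1,3) assms(2) by (auto simp: doubleton_eq_iff)
  then show "(inS n I i \<and> inS n I j \<and> (\<forall>k. i < k \<and> k < j \<longrightarrow> \<not> inS n I k)) \<or>
     (inS n (-I) i \<and> inS n (-I) j \<and> (\<forall>k. i < k \<and> k < j \<longrightarrow> \<not> inS n (-I) k))" using ab(5) by simp
next
  assume "(inS n I i \<and> inS n I j \<and> (\<forall>k. i < k \<and> k < j \<longrightarrow> \<not> inS n I k)) \<or>
     (inS n (-I) i \<and> inS n (-I) j \<and> (\<forall>k. i < k \<and> k < j \<longrightarrow> \<not> inS n (-I) k))"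
  then show "{i,j} \<in> sideE n I" unfolding sideE_def using assms by blast
qed

lemma mem_sideE1:
  assumes "1 \<le> i" "i < j" "j \<le> n" "inS n J i" "inS n J j" "\<forall>k. i < k \<and> k < j \<longrightarrow> \<not> inS n J k"
  shows "{i,j} \<in> sideE n J"
  using assms mem_sideE[OF assms(1-3), of J] by blast

lemma exists_up:
  assumes "1 \<le> v" "v < L" "L \<le> n" "inS n J v" "\<forall>k. v < k \<and> k < L \<longrightarrow> \<not> inS n J k"
  shows "\<exists>j. L \<le> j \<and> j \<le> n \<and> {v,j} \<in> sideE n J"
proof -
  define j where "j = (LEAST j. L \<le> j \<and> inS n J j)"
  have ex: "L \<le> n \<and> inS n J n" using assms unfolding inS_def by auto
  have j1: "L \<le> j \<and> inS n J j" unfolding j_def by (rule LeastI[of _ n]) (rule ex)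
  have j2: "j \<le> n" unfolding j_def by (rule Least_le) (rule ex)
  have bet: "\<forall>k. v < k \<and> k < j \<longrightarrow> \<not> inS n J k"
  proof (intro allI impI)
    fix k assume k: "v < k \<and> k < j"
    show "\<not> inS n J k"
    proof (cases "k < L")
      case True then show ?thesis using assms(5) k by auto
    next
      case False
      show ?thesis
      proof
        assume "inS n J k"
        then have "j \<le> k" unfolding j_def using False by (intro Least_le) auto
        then show False using k by auto
      qed
    qed
  qed
  have "{v,j} \<in> sideE n J" by (rule mem_sideE1) (use assms j1 j2 bet in auto)
  then show ?thesis using j1 j2 by blast
qed

lemma exists_down:
  assumes "1 \<le> L" "L < v" "v \<le> n" "inS n J v" "\<forall>k. L < k \<and> k < v \<longrightarrow> \<not> inS n J k"
  shows "\<exists>j. 1 \<le> j \<and> j \<le> L \<and> {j,v} \<in> sideE n J"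
proof -
  define j where "j = (GREATEST j. j \<le> L \<and> inS n J j)"
  have ex: "1 \<le> L \<and> inS n J 1" using assms unfolding inS_def by auto
  have bd: "\<forall>y. y \<le> L \<and> inS n J y \<longrightarrow> y \<le> L" by auto
  have j1: "j \<le> L \<and> inS n J j" unfolding j_def by (rule GreatestI_nat[of _ 1 L]) (use ex in auto)
  have j2: "1 \<le> j" unfolding j_def by (rule Greatest_le_nat[of _ 1 L]) (use ex in auto)
  have bet: "\<forall>k. j < k \<and> k < v \<longrightarrow> \<not> inS n J k"
  proof (intro allI impI)
    fix k assume k: "j < k \<and> k < v"
    show "\<not> inS n J k"
    proof (cases "L < k")
      case True then show ?thesis using assms(5) k by auto
    next
      case False
      show ?thesis
      proof
        assume "inS n J k"
        then have "k \<le> j" unfolding j_def using False by (intro Greatest_le_nat[of _ k L]) auto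
        then show False using k by auto
      qed
    qed
  qed
  have "{j,v} \<in> sideE n J" by (rule mem_sideE1) (use assms j1 j2 bet in auto)
  then show ?thesis using j1 j2 by blast
qed


lemma R1: assumes "2 \<le> k" "k + 2 \<le> n" shows "{k, Suc k} \<in> sideE n I \<longleftrightarrow> \<not> tt I k"
proof -
  have v: "\<forall>j. k < j \<and> j < Suc k \<longrightarrow> P j" for P by auto
  have a: "inS n I k \<longleftrightarrow> k \<in> I" "inS n I (Suc k) \<longleftrightarrow> Suc k \<in> I"
    "inS n (-I) k \<longleftrightarrow> k \<notin> I" "inS n (-I) (Suc k) \<longleftrightarrow> Suc k \<notin> I"
    using assms by (simp_all add: inS_int inS_compl_int)
  have "{k, Suc k} \<in> sideE n I \<longleftrightarrow> (inS n I k \<and> inS n I (Suc k)) \<or> (inS n (-I) k \<and> inS n (-I) (Suc k))"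
    using assms v by (subst mem_sideE) auto
  then show ?thesis unfolding a tt_def by blast
qed

lemma R3: assumes "2 \<le> k" "k + 3 \<le> n" shows "{k, k+2} \<in> sideE n I \<longleftrightarrow> tt I k \<and> tt I (Suc k)"
proof -
  have v: "(\<forall>j. k < j \<and> j < k+2 \<longrightarrow> P j) \<longleftrightarrow> P (Suc k)" for P
  proof
    assume "\<forall>j. k < j \<and> j < k+2 \<longrightarrow> P j" then show "P (Suc k)" by auto
  next
    assume "P (Suc k)"
    show "\<forall>j. k < j \<and> j < k+2 \<longrightarrow> P j"
    proof (intro allI impI)
      fix j assume "k < j \<and> j < k+2" then have "j = Suc k" by auto
      then show "P j" using \<open>P (Suc k)\<close> by simp
    qed
  qed
  have a: "inS n I k \<longleftrightarrow> k \<in> I" "inS n I (Suc k) \<longleftrightarrow> Suc k \<in> I" "inS n I (k+2) \<longleftrightarrow> k+2 \<in> I"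
    "inS n (-I) k \<longleftrightarrow> k \<notin> I" "inS n (-I) (Suc k) \<longleftrightarrow> Suc k \<notin> I" "inS n (-I) (k+2) \<longleftrightarrow> k+2 \<notin> I"
    using assms by (simp_all add: inS_int inS_compl_int)
  have "{k, k+2} \<in> sideE n I \<longleftrightarrow> (inS n I k \<and> inS n I (k+2) \<and> \<not> inS n I (Suc k)) \<or> (inS n (-I) k \<and> inS n (-I) (k+2) \<and> \<not> inS n (-I) (Suc k))"
    using mem_sideE[of k "k+2" n I] assms v[of "\<lambda>j. \<not> inS n I j"] v[of "\<lambda>j. \<not> inS n (-I) j"] by simp
  then show ?thesis unfolding a tt_def by auto
qed



lemma Rup: assumes "2 \<le> v" "v + 3 \<le> n"
  shows "(\<exists>j. v+2 < j \<and> j \<le> n \<and> {v,j} \<in> sideE n I) \<longleftrightarrow> tt I v \<and> \<not> tt I (Suc v)"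
proof
  assume "\<exists>j. v+2 < j \<and> j \<le> n \<and> {v,j} \<in> sideE n I"
  then obtain j where j: "v+2 < j" "j \<le> n" "{v,j} \<in> sideE n I" by blast
  have b1: "v < Suc v \<and> Suc v < j" "v < v+2 \<and> v+2 < j" using j by auto
  have a: "inS n I v \<longleftrightarrow> v \<in> I" "inS n I (Suc v) \<longleftrightarrow> Suc v \<in> I" "inS n I (v+2) \<longleftrightarrow> v+2 \<in> I"
    "inS n (-I) v \<longleftrightarrow> v \<notin> I" "inS n (-I) (Suc v) \<longleftrightarrow> Suc v \<notin> I" "inS n (-I) (v+2) \<longleftrightarrow> v+2 \<notin> I"
    using assms by (simp_all add: inS_int inS_compl_int)
  from j(3) have "(inS n I v \<and> inS n I j \<and> (\<forall>k. v < k \<and> k < j \<longrightarrow> \<not> inS n I k)) \<or>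
     (inS n (-I) v \<and> inS n (-I) j \<and> (\<forall>k. v < k \<and> k < j \<longrightarrow> \<not> inS n (-I) k))"
    using mem_sideE[of v j n I] assms j by simp
  then show "tt I v \<and> \<not> tt I (Suc v)"
  proof
    assume h: "inS n I v \<and> inS n I j \<and> (\<forall>k. v < k \<and> k < j \<longrightarrow> \<not> inS n I k)"
    then have "\<not> inS n I (Suc v)" "\<not> inS n I (v+2)" using b1 by blast+
    then show ?thesis using h unfolding a tt_def by simp
  next
    assume h: "inS n (-I) v \<and> inS n (-I) j \<and> (\<forall>k. v < k \<and> k < j \<longrightarrow> \<not> inS n (-I) k)"
    then have "\<not> inS n (-I) (Suc v)" "\<not> inS n (-I) (v+2)" using b1 by blast+
    then show ?thesis using h unfolding a tt_def by simp
  qed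
next
  assume h: "tt I v \<and> \<not> tt I (Suc v)"
  define J where "J = (if v \<in> I then I else -I)"
  have sJ: "sideE n J = sideE n I" unfolding J_def using sideE_compl by simp
  have iJ: "inS n J k \<longleftrightarrow> (k \<in> I \<longleftrightarrow> v \<in> I)" if "2 \<le> k" "k < n" for k
    using that unfolding J_def by (auto simp: inS_int inS_compl_int)
  have "\<exists>j. v + 3 \<le> j \<and> j \<le> n \<and> {v,j} \<in> sideE n J"
  proof (rule exists_up)
    show "inS n J v" using iJ assms by auto
    show "\<forall>k. v < k \<and> k < v + 3 \<longrightarrow> \<not> inS n J k"
    proof (intro allI impI)
      fix k assume k: "v < k \<and> k < v + 3"
      then have "k = Suc v \<or> k = v + 2" by auto
      moreover have "(Suc v \<in> I) \<noteq> (v \<in> I)" "(v + 2 \<in> I) \<noteq> (v \<in> I)" using h unfolding tt_def by auto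
      ultimately show "\<not> inS n J k" using iJ[of k] k assms by auto
    qed
  qed (use assms in auto)
  then show "\<exists>j. v+2 < j \<and> j \<le> n \<and> {v,j} \<in> sideE n I" using sJ by (metis Suc_le_eq add_Suc_right numeral_3_eq_3 numeral_2_eq_2)
qed

lemma Rlow: assumes "2 \<le> u" "u + 3 \<le> n"
  shows "(\<exists>j. 1 \<le> j \<and> j < u \<and> {j,u+2} \<in> sideE n I) \<longleftrightarrow> tt I (Suc u) \<and> \<not> tt I u"
proof
  assume "\<exists>j. 1 \<le> j \<and> j < u \<and> {j,u+2} \<in> sideE n I"
  then obtain j where j: "1 \<le> j" "j < u" "{j,u+2} \<in> sideE n I" by blast
  have b1: "j < Suc u \<and> Suc u < u+2" "j < u \<and> u < u+2" using j by auto
  have a: "inS n I u \<longleftrightarrow> u \<in> I" "inS n I (Suc u) \<longleftrightarrow> Suc u \<in> I" "inS n I (u+2) \<longleftrightarrow> u+2 \<in> I"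
    "inS n (-I) u \<longleftrightarrow> u \<notin> I" "inS n (-I) (Suc u) \<longleftrightarrow> Suc u \<notin> I" "inS n (-I) (u+2) \<longleftrightarrow> u+2 \<notin> I"
    using assms by (simp_all add: inS_int inS_compl_int)
  from j(3) have "(inS n I j \<and> inS n I (u+2) \<and> (\<forall>k. j < k \<and> k < u+2 \<longrightarrow> \<not> inS n I k)) \<or>
     (inS n (-I) j \<and> inS n (-I) (u+2) \<and> (\<forall>k. j < k \<and> k < u+2 \<longrightarrow> \<not> inS n (-I) k))"
    using mem_sideE[of j "u+2" n I] assms j by simp
  then show "tt I (Suc u) \<and> \<not> tt I u"
  proof
    assume h: "inS n I j \<and> inS n I (u+2) \<and> (\<forall>k. j < k \<and> k < u+2 \<longrightarrow> \<not> inS n I k)"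
    then have "\<not> inS n I (Suc u)" "\<not> inS n I u" using b1 by blast+
    then show ?thesis using h unfolding a tt_def by simp
  next
    assume h: "inS n (-I) j \<and> inS n (-I) (u+2) \<and> (\<forall>k. j < k \<and> k < u+2 \<longrightarrow> \<not> inS n (-I) k)"
    then have "\<not> inS n (-I) (Suc u)" "\<not> inS n (-I) u" using b1 by blast+
    then show ?thesis using h unfolding a tt_def by simp
  qed
next
  assume h: "tt I (Suc u) \<and> \<not> tt I u"
  define J where "J = (if u + 2 \<in> I then I else -I)"
  have sJ: "sideE n J = sideE n I" unfolding J_def using sideE_compl by simp
  have iJ: "inS n J k \<longleftrightarrow> (k \<in> I \<longleftrightarrow> u + 2 \<in> I)" if "2 \<le> k" "k < n" for k
    using that unfolding J_def by (auto simp: inS_int inS_compl_int)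
  have nJ: "\<not> inS n J k" if k: "u - 1 < k" "k < u + 2" for k
  proof -
    have "k = Suc u \<or> k = u" using k by auto
    moreover have "(Suc u \<in> I) \<noteq> (u + 2 \<in> I)" "(u \<in> I) \<noteq> (u + 2 \<in> I)" using h unfolding tt_def by auto
    moreover have "2 \<le> k" "k < n" using k assms by auto
    ultimately show ?thesis using iJ[of k] by auto
  qed
  have "\<exists>j. 1 \<le> j \<and> j \<le> u - 1 \<and> {j,u+2} \<in> sideE n J"
  proof (rule exists_down)
    show "inS n J (u+2)" using iJ[of "u+2"] assms by simp
    show "\<forall>k. u - 1 < k \<and> k < u + 2 \<longrightarrow> \<not> inS n J k" using nJ by blast
    show "1 \<le> u - 1" "u - 1 < u + 2" "u + 2 \<le> n" using assms by auto
  qed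
  then obtain j where "1 \<le> j" "j \<le> u - 1" "{j,u+2} \<in> sideE n I" using sJ by auto
  moreover have "j < u" using \<open>j \<le> u - 1\<close> assms(1) by linarith
  ultimately show "\<exists>j. 1 \<le> j \<and> j < u \<and> {j,u+2} \<in> sideE n I" by blast
qed

lemma R4: assumes "2 \<in> I" "5 \<le> n"
  shows "(\<exists>j. 5 \<le> j \<and> j \<le> n \<and> {1,j} \<in> sideE n I) \<longleftrightarrow> 3 \<in> I \<and> 4 \<in> I"
proof
  assume "\<exists>j. 5 \<le> j \<and> j \<le> n \<and> {1,j} \<in> sideE n I"
  then obtain j where j: "5 \<le> j" "j \<le> n" "{1,j} \<in> sideE n I" by blast
  have "(inS n I 1 \<and> inS n I j \<and> (\<forall>k. 1 < k \<and> k < j \<longrightarrow> \<not> inS n I k)) \<or>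
     (inS n (-I) 1 \<and> inS n (-I) j \<and> (\<forall>k. 1 < k \<and> k < j \<longrightarrow> \<not> inS n (-I) k))"
    using mem_sideE[of 1 j n I] j by simp
  then show "3 \<in> I \<and> 4 \<in> I"
  proof
    assume h: "inS n I 1 \<and> inS n I j \<and> (\<forall>k. 1 < k \<and> k < j \<longrightarrow> \<not> inS n I k)"
    have "1 < (2::nat) \<and> 2 < j" using j by simp
    then have "\<not> inS n I 2" using h by blast
    then show ?thesis using assms unfolding inS_def by simp
  next
    assume h: "inS n (-I) 1 \<and> inS n (-I) j \<and> (\<forall>k. 1 < k \<and> k < j \<longrightarrow> \<not> inS n (-I) k)"
    have "1 < (3::nat) \<and> 3 < j" "1 < (4::nat) \<and> 4 < j" using j by simp_all
    then have "\<not> inS n (-I) 3" "\<not> inS n (-I) 4" using h by blast+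
    then show ?thesis unfolding inS_def by simp
  qed
next
  assume h: "3 \<in> I \<and> 4 \<in> I"
  have nJ: "\<not> inS n (-I) k" if k: "1 < k" "k < 5" for k
  proof -
    have "k = 2 \<or> k = 3 \<or> k = 4" using k by auto
    moreover have "k \<noteq> n" using k assms by auto
    ultimately show ?thesis using h assms(1) unfolding inS_def by auto
  qed
  have "\<exists>j. 5 \<le> j \<and> j \<le> n \<and> {1,j} \<in> sideE n (-I)"
  proof (rule exists_up)
    show "inS n (-I) 1" unfolding inS_def by simp
    show "\<forall>k. 1 < k \<and> k < 5 \<longrightarrow> \<not> inS n (-I) k" using nJ by blast
    show "1 \<le> (1::nat)" "1 < (5::nat)" "5 \<le> n" using assms by auto
  qed
  then show "\<exists>j. 5 \<le> j \<and> j \<le> n \<and> {1,j} \<in> sideE n I" using sideE_compl by simp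
qed
lemma R5: assumes "2 \<le> L" "L < n" and A: "\<And>k. L \<le> k \<Longrightarrow> k < n \<Longrightarrow> (k \<in> I \<longleftrightarrow> L \<in> I)"
  shows "\<exists>j. 1 \<le> j \<and> j < L \<and> {j,n} \<in> sideE n I"
proof -
  define J where "J = (if L \<in> I then -I else I)"
  have sJ: "sideE n J = sideE n I" unfolding J_def using sideE_compl by simp
  have nJ: "\<not> inS n J k" if k: "L - 1 < k" "k < n" for k
  proof -
    have k2: "L \<le> k" "k \<noteq> 1" using assms(1) k by auto
    have "k \<in> I \<longleftrightarrow> L \<in> I" by (rule A) (use k k2 in auto)
    then show ?thesis using k k2 unfolding J_def inS_def by (cases "L \<in> I") auto
  qed
  have "\<exists>j. 1 \<le> j \<and> j \<le> L - 1 \<and> {j,n} \<in> sideE n J"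
  proof (rule exists_down)
    show "inS n J n" unfolding inS_def by simp
    show "\<forall>k. L - 1 < k \<and> k < n \<longrightarrow> \<not> inS n J k" using nJ by blast
    show "1 \<le> L - 1" "L - 1 < n" "n \<le> n" using assms(1,2) by auto
  qed
  then obtain j where "1 \<le> j" "j \<le> L - 1" "{j,n} \<in> sideE n I" using sJ by auto
  moreover have "j < L" using \<open>j \<le> L - 1\<close> assms(1) by linarith
  ultimately show ?thesis by blast
qed

lemma code_qs_iff:
  assumes "3 \<le> k" "s \<le> m"
  shows "code_qs m q s k \<longleftrightarrow> (odd k \<and> k \<le> 2*q+1) \<or> (even k \<and> 4*m+4-2* s \<le> k \<and> k \<le> 4*m+2) \<or> 4*m+3 \<le> k"
proof -
  have A: "(\<exists>i\<in>{1..q}. k = 2*i + 1) \<longleftrightarrow> odd k \<and> k \<le> 2*q+1"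
  proof
    assume "\<exists>i\<in>{1..q}. k = 2*i + 1" then show "odd k \<and> k \<le> 2*q+1" by auto
  next
    assume h: "odd k \<and> k \<le> 2*q+1"
    then obtain i where "k = 2*i+1" by (metis oddE)
    then show "\<exists>i\<in>{1..q}. k = 2*i + 1" using h assms by (intro bexI[of _ i]) auto
  qed
  have B: "(\<exists>j\<in>{1..s}. k = 4*m + 4 - 2*j) \<longleftrightarrow> even k \<and> 4*m+4-2* s \<le> k \<and> k \<le> 4*m+2"
  proof
    assume "\<exists>j\<in>{1..s}. k = 4*m + 4 - 2*j"
    then obtain j where j: "j \<in> {1..s}" "k = 4*m + 4 - 2*j" by blast
    then have "k + 2*j = 4*m+4" using assms by auto
    then show "even k \<and> 4*m+4-2* s \<le> k \<and> k \<le> 4*m+2" using j by presburger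
  next
    assume h: "even k \<and> 4*m+4-2* s \<le> k \<and> k \<le> 4*m+2"
    then obtain i where i: "k = 2*i" by (metis evenE)
    define j where "j = 2*m+2 - i"
    have "j \<in> {1..s} \<and> k = 4*m + 4 - 2*j" using h i assms unfolding j_def by auto
    then show "\<exists>j\<in>{1..s}. k = 4*m + 4 - 2*j" by blast
  qed
  show ?thesis unfolding code_qs_def A B ..
qed

definition Xq :: "nat \<Rightarrow> nat \<Rightarrow> nat \<Rightarrow> nat \<Rightarrow> nat set" where
  "Xq n m q s = Xc n (code_qs m q s)"

lemma mem_Xq:
  assumes "s \<le> m"
  shows "k \<in> Xq n m q s \<longleftrightarrow> k = 2 \<or> (3 \<le> k \<and> k < n \<and>
     ((odd k \<and> k \<le> 2*q+1) \<or> (even k \<and> 4*m+4-2* s \<le> k \<and> k \<le> 4*m+2) \<or> 4*m+3 \<le> k))"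
  unfolding Xq_def Xc_def using code_qs_iff[OF _ assms] by auto

lemma memL:
  assumes "s \<le> m" "2 \<le> k" "k \<le> 2*m+2"
  shows "k \<in> Xq n m q s \<longleftrightarrow> k = 2 \<or> (odd k \<and> 3 \<le> k \<and> k \<le> 2*q+1 \<and> k < n)"
  unfolding mem_Xq[OF assms(1)] using assms by auto

lemma memR:
  assumes "s \<le> m" "q \<le> m" "2*m+2 \<le> k" "1 \<le> m"
  shows "k \<in> Xq n m q s \<longleftrightarrow> (even k \<and> 4*m+4-2 * s \<le> k \<and> k \<le> 4*m+2 \<and> k < n) \<or> (4*m+3 \<le> k \<and> k < n)"
  unfolding mem_Xq[OF assms(1)] using assms by auto

definition tL :: "nat \<Rightarrow> nat \<Rightarrow> bool" where
  "tL q k \<longleftrightarrow> (k=2 \<and> q=0) \<or> (3 \<le> k \<and> k \<le> 2*q+1)"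

definition tR :: "nat \<Rightarrow> nat \<Rightarrow> nat \<Rightarrow> bool" where
  "tR m s k \<longleftrightarrow> (4*m+3-2 * s \<le> k \<and> k \<le> 4*m+1) \<or> (k = 4*m+2 \<and> s = 0)"

lemma tt_Xq_L:
  assumes "1 \<le> m" "q \<le> m" "s \<le> m" "4*m+3 \<le> n" "2 \<le> k" "k \<le> 2*m+1"
  shows "tt (Xq n m q s) k \<longleftrightarrow> tL q k"
proof -
  have "tt (Xq n m q s) k \<longleftrightarrow> (k = 2 \<or> (odd k \<and> 3 \<le> k \<and> k \<le> 2*q+1)) \<noteq> (odd (Suc k) \<and> 3 \<le> Suc k \<and> Suc k \<le> 2*q+1)"
    unfolding tt_def using memL[of s m k n q] memL[of s m "Suc k" n q] assms by auto
  also have "\<dots> \<longleftrightarrow> tL q k" unfolding tL_def using assms(5) by presburger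
  finally show ?thesis .
qed

lemma tt_Xq_R:
  assumes "1 \<le> m" "q \<le> m" "s \<le> m" "4*m+3 \<le> n" "2*m+2 \<le> k" "k + 2 \<le> n"
  shows "tt (Xq n m q s) k \<longleftrightarrow> tR m s k"
proof -
  have "tt (Xq n m q s) k \<longleftrightarrow> ((even k \<and> 4*m+4-2 * s \<le> k \<and> k \<le> 4*m+2) \<or> 4*m+3 \<le> k)
      \<noteq> ((even (Suc k) \<and> 4*m+4-2 * s \<le> Suc k \<and> Suc k \<le> 4*m+2) \<or> 4*m+3 \<le> Suc k)"
    unfolding tt_def using memR[of s m q k n] memR[of s m q "Suc k" n] assms by auto
  also have "\<dots> \<longleftrightarrow> tR m s k"
  proof (cases "even k")
    case True
    then obtain i where i: "k = 2*i" by (metis evenE)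
    have a1: "4*m+4-2 * s \<le> k \<longleftrightarrow> 2*m+2 \<le> i+s" using i assms(3) by arith
    have a2: "k \<le> 4*m+2 \<longleftrightarrow> i \<le> 2*m+1" using i by arith
    have a3: "4*m+3 \<le> k \<longleftrightarrow> 2*m+2 \<le> i" using i by arith
    have a4: "4*m+3 \<le> Suc k \<longleftrightarrow> 2*m+1 \<le> i" using i by arith
    have a5: "4*m+3-2 * s \<le> k \<longleftrightarrow> 2*m+2 \<le> i+s" using i assms(3) by arith
    have a6: "k \<le> 4*m+1 \<longleftrightarrow> i \<le> 2*m" using i by arith
    have a7: "k = 4*m+2 \<longleftrightarrow> i = 2*m+1" using i by arith
    have ev: "even k" "\<not> even (Suc k)" using True by auto
    show ?thesis unfolding tR_def a1 a2 a3 a4 a5 a6 a7 using ev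
      by (cases "i \<le> 2*m"; cases "i = 2*m+1"; auto)
  next
    case False
    then obtain i where i: "k = 2*i+1" by (metis oddE)
    have a1: "4*m+4-2 * s \<le> Suc k \<longleftrightarrow> 2*m+1 \<le> i+s" using i assms(3) by arith
    have a2: "Suc k \<le> 4*m+2 \<longleftrightarrow> i \<le> 2*m" using i by arith
    have a3: "4*m+3 \<le> k \<longleftrightarrow> 2*m+1 \<le> i" using i by arith
    have a4: "4*m+3 \<le> Suc k \<longleftrightarrow> 2*m+1 \<le> i" using i by arith
    have a5: "4*m+3-2 * s \<le> k \<longleftrightarrow> 2*m+1 \<le> i+s" using i assms(3) by arith
    have a6: "k \<le> 4*m+1 \<longleftrightarrow> i \<le> 2*m" using i by arith
    have a7: "k \<noteq> 4*m+2" using i by arith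
    have ev: "\<not> even k" "even (Suc k)" using False by auto
    show ?thesis unfolding tR_def a1 a2 a3 a4 a5 a6 using ev a7
      by (cases "i \<le> 2*m"; auto)
  qed
  finally show ?thesis .
qed


lemma chain_const:
  assumes "\<And>v. a \<le> v \<Longrightarrow> v < b \<Longrightarrow> (t v \<longleftrightarrow> t (Suc v))"
  shows "a \<le> k \<Longrightarrow> k \<le> b \<Longrightarrow> t k = t a"
proof (induction k)
  case 0 then show ?case by simp
next
  case (Suc k)
  show ?case
  proof (cases "a = Suc k")
    case True then show ?thesis by simp
  next
    case False
    then have "a \<le> k" "k < b" using Suc.prems by auto
    then show ?thesis using Suc.IH assms[of k] by auto
  qed
qed

lemma left_part:
  fixes t tx ty :: "nat \<Rightarrow> bool"
  assumes m1: "1 \<le> m" and qq: "q < q'" "q' \<le> m" and n: "4*m+3 \<le> n"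
  and TX: "\<And>k. 2 \<le> k \<Longrightarrow> k \<le> 2*m+1 \<Longrightarrow> (tx k \<longleftrightarrow> (k=2 \<and> q=0) \<or> (3 \<le> k \<and> k \<le> 2*q+1))"
  and TY: "\<And>k. 2 \<le> k \<Longrightarrow> k \<le> 2*m+1 \<Longrightarrow> (ty k \<longleftrightarrow> (k=2 \<and> q'=0) \<or> (3 \<le> k \<and> k \<le> 2*q'+1))"
  and A: "\<And>k. 2 \<le> k \<Longrightarrow> k + 2 \<le> n \<Longrightarrow> tx k = ty k \<Longrightarrow> t k = tx k"
  and B: "\<And>v. 2 \<le> v \<Longrightarrow> v + 3 \<le> n \<Longrightarrow> \<not>(tx v \<and> \<not> tx (Suc v)) \<Longrightarrow> \<not>(ty v \<and> \<not> ty (Suc v)) \<Longrightarrow> \<not>(t v \<and> \<not> t (Suc v))"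
  and B': "\<And>u. 2 \<le> u \<Longrightarrow> u + 3 \<le> n \<Longrightarrow> \<not>(tx (Suc u) \<and> \<not> tx u) \<Longrightarrow> \<not>(ty (Suc u) \<and> \<not> ty u) \<Longrightarrow> \<not>(t (Suc u) \<and> \<not> t u)"
  and C: "\<And>k. 2 \<le> k \<Longrightarrow> k + 3 \<le> n \<Longrightarrow> \<not>(tx k \<and> tx (Suc k)) \<Longrightarrow> \<not>(ty k \<and> ty (Suc k)) \<Longrightarrow> \<not>(t k \<and> t (Suc k))"
  and D: "\<not>(\<not> t 2 \<and> \<not> t 3)"
  shows "(\<forall>k. 2 \<le> k \<and> k \<le> 2*m+1 \<longrightarrow> t k = tx k) \<or> (\<forall>k. 2 \<le> k \<and> k \<le> 2*m+1 \<longrightarrow> t k = ty k)"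
proof -
  define lo where "lo = (if q = 0 then 3 else 2*q+2)"
  have lo: "3 \<le> lo" "lo \<le> 2*q'+1" using qq unfolding lo_def by auto
  have step: "t v \<longleftrightarrow> t (Suc v)" if v: "lo \<le> v" "v < 2*q'+1" for v
  proof -
    have r: "2 \<le> v" "v + 3 \<le> n" "Suc v \<le> 2*m+1" using v lo qq n m1 by auto
    have x: "\<not> tx v" "\<not> tx (Suc v)" using TX[of v] TX[of "Suc v"] r v unfolding lo_def by (auto split: if_splits)
    have y: "ty v" "ty (Suc v)" using TY[of v] TY[of "Suc v"] r v lo by auto
    show ?thesis using B[OF r(1,2)] B'[OF r(1,2)] x y by blast
  qed
  have const: "t k = t lo" if "lo \<le> k" "k \<le> 2*q'+1" for k
    using chain_const[of lo "2*q'+1" t k] step that by blast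
  have outside: "t k = tx k" if k: "2 \<le> k" "k \<le> 2*m+1" "k < lo \<or> 2*q'+1 < k" "\<not>(k = 2 \<and> q = 0)" for k
  proof (rule A)
    show "2 \<le> k" "k + 2 \<le> n" using k n by auto
    show "tx k = ty k" using TX[OF k(1,2)] TY[OF k(1,2)] k qq unfolding lo_def by (auto split: if_splits)
  qed
  have xD: "\<not> tx k" if "lo \<le> k" "k \<le> 2*q'+1" for k
    using TX[of k] that lo qq unfolding lo_def by (auto split: if_splits)
  have yD: "ty k" if "lo \<le> k" "k \<le> 2*q'+1" for k
    using TY[of k] that lo qq by auto
  show ?thesis
  proof (cases "q = 0")
    case False
    show ?thesis
    proof (cases "t lo")
      case True
      have "\<forall>k. 2 \<le> k \<and> k \<le> 2*m+1 \<longrightarrow> t k = ty k"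
      proof (intro allI impI)
        fix k assume k: "2 \<le> k \<and> k \<le> 2*m+1"
        show "t k = ty k"
        proof (cases "lo \<le> k \<and> k \<le> 2*q'+1")
          case True then show ?thesis using const yD \<open>t lo\<close> by auto
        next
          case c: False
          have "t k = tx k" using outside[of k] k c False by auto
          moreover have "tx k = ty k" using TX[of k] TY[of k] k c qq False unfolding lo_def by auto
          ultimately show ?thesis by simp
        qed
      qed
      then show ?thesis by blast
    next
      case f: False
      have "\<forall>k. 2 \<le> k \<and> k \<le> 2*m+1 \<longrightarrow> t k = tx k"
      proof (intro allI impI)
        fix k assume k: "2 \<le> k \<and> k \<le> 2*m+1"
        show "t k = tx k"
        proof (cases "lo \<le> k \<and> k \<le> 2*q'+1")
          case True then show ?thesis using const xD f by auto
        next
          case c: False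
          show ?thesis using outside[of k] k c False by auto
        qed
      qed
      then show ?thesis by blast
    qed
  next
    case q0: True
    have lo3: "lo = 3" using q0 unfolding lo_def by simp
    have x23: "tx 2" "\<not> tx 3" using TX[of 2] TX[of 3] q0 m1 by auto
    have y23: "\<not> ty 2" "ty 3" using TY[of 2] TY[of 3] q0 qq m1 by auto
    have "\<not>(t 2 \<and> t 3)" using C[of 2] n m1 x23 y23 by auto
    then have t23: "t 2 \<longleftrightarrow> \<not> t 3" using D by blast
    show ?thesis
    proof (cases "t 3")
      case True
      have "\<forall>k. 2 \<le> k \<and> k \<le> 2*m+1 \<longrightarrow> t k = ty k"
      proof (intro allI impI)
        fix k assume k: "2 \<le> k \<and> k \<le> 2*m+1"
        show "t k = ty k"
        proof (cases "k = 2")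
          case True then show ?thesis using t23 \<open>t 3\<close> y23 by simp
        next
          case k2: False
          show ?thesis
          proof (cases "k \<le> 2*q'+1")
            case True then show ?thesis using const[of k] yD[of k] lo3 k k2 \<open>t 3\<close> by auto
          next
            case c: False
            have "t k = tx k" using outside[of k] k c k2 by auto
            moreover have "tx k = ty k" using TX[of k] TY[of k] k c qq by auto
            ultimately show ?thesis by simp
          qed
        qed
      qed
      then show ?thesis by blast
    next
      case f: False
      have "\<forall>k. 2 \<le> k \<and> k \<le> 2*m+1 \<longrightarrow> t k = tx k"
      proof (intro allI impI)
        fix k assume k: "2 \<le> k \<and> k \<le> 2*m+1"
        show "t k = tx k"
        proof (cases "k = 2")
          case True then show ?thesis using t23 f x23 by simp
        next
          case k2: False
          show ?thesis
          proof (cases "k \<le> 2*q'+1")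
            case True then show ?thesis using const[of k] xD[of k] lo3 k k2 f by auto
          next
            case c: False
            show ?thesis using outside[of k] k c k2 lo3 by auto
          qed
        qed
      qed
      then show ?thesis by blast
    qed
  qed
qed

lemma right_part:
  fixes t tx ty :: "nat \<Rightarrow> bool"
  assumes m1: "1 \<le> m" and ss: "s < s'" "s' \<le> m" and n: "4*m+3 \<le> n"
  and TX: "\<And>k. 2*m+2 \<le> k \<Longrightarrow> k + 2 \<le> n \<Longrightarrow> (tx k \<longleftrightarrow> (4*m+3-2* s \<le> k \<and> k \<le> 4*m+1) \<or> (k = 4*m+2 \<and> s = 0))"
  and TY: "\<And>k. 2*m+2 \<le> k \<Longrightarrow> k + 2 \<le> n \<Longrightarrow> (ty k \<longleftrightarrow> (4*m+3-2* s' \<le> k \<and> k \<le> 4*m+1) \<or> (k = 4*m+2 \<and> s' = 0))"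
  and A: "\<And>k. 2 \<le> k \<Longrightarrow> k + 2 \<le> n \<Longrightarrow> tx k = ty k \<Longrightarrow> t k = tx k"
  and B: "\<And>v. 2 \<le> v \<Longrightarrow> v + 3 \<le> n \<Longrightarrow> \<not>(tx v \<and> \<not> tx (Suc v)) \<Longrightarrow> \<not>(ty v \<and> \<not> ty (Suc v)) \<Longrightarrow> \<not>(t v \<and> \<not> t (Suc v))"
  and B': "\<And>u. 2 \<le> u \<Longrightarrow> u + 3 \<le> n \<Longrightarrow> \<not>(tx (Suc u) \<and> \<not> tx u) \<Longrightarrow> \<not>(ty (Suc u) \<and> \<not> ty u) \<Longrightarrow> \<not>(t (Suc u) \<and> \<not> t u)"
  and C: "\<And>k. 2 \<le> k \<Longrightarrow> k + 3 \<le> n \<Longrightarrow> \<not>(tx k \<and> tx (Suc k)) \<Longrightarrow> \<not>(ty k \<and> ty (Suc k)) \<Longrightarrow> \<not>(t k \<and> t (Suc k))"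
  and EH: "4*m+4 \<le> n \<Longrightarrow> \<not>(\<forall>k. 2*m+2 \<le> k \<and> k + 2 \<le> n \<longrightarrow> \<not> t k)"
  shows "(\<forall>k. 2*m+2 \<le> k \<and> k + 2 \<le> n \<longrightarrow> t k = tx k) \<or> (\<forall>k. 2*m+2 \<le> k \<and> k + 2 \<le> n \<longrightarrow> t k = ty k)"
proof -
  define lo where "lo = 4*m+3-2* s'"
  define hi where "hi = (if s = 0 then 4*m+1 else 4*m+2-2* s)"
  have lohi: "2*m+3 \<le> lo" "lo \<le> hi" "hi \<le> 4*m+1" "hi + 2 \<le> n" using ss m1 n unfolding lo_def hi_def by auto
  have step: "t v \<longleftrightarrow> t (Suc v)" if v: "lo \<le> v" "v < hi" for v
  proof -
    have r: "2 \<le> v" "v + 3 \<le> n" "2*m+2 \<le> v" "Suc v + 2 \<le> n" using v lohi n by auto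
    have x: "\<not> tx v" "\<not> tx (Suc v)" using TX[of v] TX[of "Suc v"] r v lohi ss unfolding hi_def by (auto split: if_splits)
    have y: "ty v" "ty (Suc v)" using TY[of v] TY[of "Suc v"] r v lohi ss unfolding lo_def by auto
    show ?thesis using B[OF r(1,2)] B'[OF r(1,2)] x y by blast
  qed
  have const: "t k = t lo" if "lo \<le> k" "k \<le> hi" for k
    using chain_const[of lo hi t k] step that by blast
  have eqxy: "tx k = ty k" if k: "2*m+2 \<le> k" "k + 2 \<le> n" "k < lo \<or> hi < k" "\<not>(k = 4*m+2 \<and> s = 0)" for k
    using TX[OF k(1,2)] TY[OF k(1,2)] k ss lohi unfolding lo_def hi_def by (auto split: if_splits)
  have outside: "t k = tx k" if k: "2*m+2 \<le> k" "k + 2 \<le> n" "k < lo \<or> hi < k" "\<not>(k = 4*m+2 \<and> s = 0)" for k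
    by (rule A) (use k eqxy[OF k] m1 in auto)
  have xD: "\<not> tx k" if "lo \<le> k" "k \<le> hi" for k
    using TX[of k] that lohi ss unfolding hi_def by (auto split: if_splits)
  have yD: "ty k" if "lo \<le> k" "k \<le> hi" for k
    using TY[of k] that lohi ss unfolding lo_def by auto
  have caseA: ?thesis if nd: "\<not>(s = 0 \<and> 4*m+4 \<le> n)"
  proof (cases "t lo")
    case True
    have "\<forall>k. 2*m+2 \<le> k \<and> k + 2 \<le> n \<longrightarrow> t k = ty k"
    proof (intro allI impI)
      fix k assume k: "2*m+2 \<le> k \<and> k + 2 \<le> n"
      show "t k = ty k"
      proof (cases "lo \<le> k \<and> k \<le> hi")
        case True then show ?thesis using const yD \<open>t lo\<close> by auto
      next
        case c: False
        have k42: "\<not>(k = 4*m+2 \<and> s = 0)" using nd k by auto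
        show ?thesis using outside[of k] eqxy[of k] k c k42 by auto
      qed
    qed
    then show ?thesis by blast
  next
    case f: False
    have "\<forall>k. 2*m+2 \<le> k \<and> k + 2 \<le> n \<longrightarrow> t k = tx k"
    proof (intro allI impI)
      fix k assume k: "2*m+2 \<le> k \<and> k + 2 \<le> n"
      show "t k = tx k"
      proof (cases "lo \<le> k \<and> k \<le> hi")
        case True then show ?thesis using const xD f by auto
      next
        case c: False
        have k42: "\<not>(k = 4*m+2 \<and> s = 0)" using nd k by auto
        show ?thesis using outside[of k] k c k42 by auto
      qed
    qed
    then show ?thesis by blast
  qed
  show ?thesis
  proof (cases "s = 0 \<and> 4*m+4 \<le> n")
    case False then show ?thesis using caseA by blast
  next
    case True
    then have s0: "s = 0" and n4: "4*m+4 \<le> n" by auto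
    have hi1: "hi = 4*m+1" using s0 unfolding hi_def by simp
    have x12: "\<not> tx (4*m+1)" "tx (4*m+2)" using TX[of "4*m+1"] TX[of "4*m+2"] s0 n4 m1 by auto
    have y12: "ty (4*m+1)" "\<not> ty (4*m+2)" using TY[of "4*m+1"] TY[of "4*m+2"] ss n4 m1 by auto
    have nb: "\<not>(t (4*m+1) \<and> t (4*m+2))" using C[of "4*m+1"] x12 y12 n4 m1 by auto
    have out2: "t k = tx k" if k: "2*m+2 \<le> k" "k + 2 \<le> n" "\<not>(lo \<le> k \<and> k \<le> hi)" "k \<noteq> 4*m+2" for k
      using outside[of k] k s0 by auto
    show ?thesis
    proof (cases "t (4*m+1)")
      case True
      have tl: "t lo" using const[of "4*m+1"] True lohi hi1 by auto
      have "\<forall>k. 2*m+2 \<le> k \<and> k + 2 \<le> n \<longrightarrow> t k = ty k"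
      proof (intro allI impI)
        fix k assume k: "2*m+2 \<le> k \<and> k + 2 \<le> n"
        show "t k = ty k"
        proof (cases "lo \<le> k \<and> k \<le> hi")
          case True then show ?thesis using const yD tl by auto
        next
          case c: False
          show ?thesis
          proof (cases "k = 4*m+2")
            case True then show ?thesis using nb \<open>t (4*m+1)\<close> y12 by simp
          next
            case False then show ?thesis using out2[of k] eqxy[of k] k c s0 by auto
          qed
        qed
      qed
      then show ?thesis by blast
    next
      case f: False
      have tl: "\<not> t lo" using const[of "4*m+1"] f lohi hi1 by auto
      show ?thesis
      proof (cases "t (4*m+2)")
        case True
        have "\<forall>k. 2*m+2 \<le> k \<and> k + 2 \<le> n \<longrightarrow> t k = tx k"
        proof (intro allI impI)
          fix k assume k: "2*m+2 \<le> k \<and> k + 2 \<le> n"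
          show "t k = tx k"
          proof (cases "lo \<le> k \<and> k \<le> hi")
            case True then show ?thesis using const xD tl by auto
          next
            case c: False
            show ?thesis
            proof (cases "k = 4*m+2")
              case True then show ?thesis using \<open>t (4*m+2)\<close> x12 by simp
            next
              case False then show ?thesis using out2[of k] k c by auto
            qed
          qed
        qed
        then show ?thesis by blast
      next
        case f2: False
        have "\<forall>k. 2*m+2 \<le> k \<and> k + 2 \<le> n \<longrightarrow> \<not> t k"
        proof (intro allI impI)
          fix k assume k: "2*m+2 \<le> k \<and> k + 2 \<le> n"
          show "\<not> t k"
          proof (cases "lo \<le> k \<and> k \<le> hi")
            case True then show ?thesis using const tl by auto
          next
            case c: False
            show ?thesis
            proof (cases "k = 4*m+2")
              case True then show ?thesis using f2 by simp
            next
              case False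
              have "\<not> tx k" using TX[of k] k c False s0 lohi hi1 by auto
              then show ?thesis using out2[of k] k c False by auto
            qed
          qed
        qed
        then show ?thesis using EH n4 by blast
      qed
    qed
  qed
qed


lemma sideE_sub_cong:
  assumes "\<And>k. 2 \<le> k \<Longrightarrow> k < n \<Longrightarrow> (k \<in> I \<longleftrightarrow> k \<in> J)"
  shows "sideE n I \<subseteq> sideE n J"
proof
  fix e assume "e \<in> sideE n I"
  then obtain i j where e: "e = {i,j}" "1 \<le> i" "i < j" "j \<le> n"
    "(inS n I i \<and> inS n I j \<and> (\<forall>k. i < k \<and> k < j \<longrightarrow> \<not> inS n I k)) \<or>
     (inS n (-I) i \<and> inS n (-I) j \<and> (\<forall>k. i < k \<and> k < j \<longrightarrow> \<not> inS n (-I) k))"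
    unfolding sideE_def by blast
  have c1: "inS n I k \<longleftrightarrow> inS n J k" if "1 \<le> k" "k \<le> n" for k
    using assms[of k] that unfolding inS_def by (cases "k = 1 \<or> k = n") auto
  have c2: "inS n (-I) k \<longleftrightarrow> inS n (-J) k" if "1 \<le> k" "k \<le> n" for k
    using assms[of k] that unfolding inS_def by (cases "k = 1 \<or> k = n") auto
  have b: "\<And>k. i < k \<Longrightarrow> k < j \<Longrightarrow> 1 \<le> k \<and> k \<le> n" using e by auto
  have "(inS n J i \<and> inS n J j \<and> (\<forall>k. i < k \<and> k < j \<longrightarrow> \<not> inS n J k)) \<or>
     (inS n (-J) i \<and> inS n (-J) j \<and> (\<forall>k. i < k \<and> k < j \<longrightarrow> \<not> inS n (-J) k))"
    using e(5) c1[of i] c1[of j] c2[of i] c2[of j] e(2,3,4) c1 c2 b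
    by (smt (verit) le_trans less_imp_le_nat)
  then show "e \<in> sideE n J" unfolding sideE_def using e by blast
qed

lemma sideE_cong:
  assumes "\<And>k. 2 \<le> k \<Longrightarrow> k < n \<Longrightarrow> (k \<in> I \<longleftrightarrow> k \<in> J)"
  shows "sideE n I = sideE n J"
  using sideE_sub_cong[of n I J] sideE_sub_cong[of n J I] assms by blast

lemma tt_eq_mem:
  assumes "2 \<in> I" "2 \<in> J" "\<And>k. 2 \<le> k \<Longrightarrow> k + 2 \<le> n \<Longrightarrow> tt I k = tt J k"
  shows "2 \<le> k \<Longrightarrow> k < n \<Longrightarrow> (k \<in> I \<longleftrightarrow> k \<in> J)"
proof (induction k)
  case 0 then show ?case by simp
next
  case (Suc k)
  show ?case
  proof (cases "Suc k = 2")
    case True then show ?thesis using assms(1,2) by metis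
  next
    case False
    then have "2 \<le> k" "k < n" "k + 2 \<le> n" using Suc.prems by auto
    then show ?thesis using Suc.IH assms(3)[of k] unfolding tt_def by auto
  qed
qed

lemma tt_eq_sideE:
  assumes "2 \<in> I" "2 \<in> J" "\<And>k. 2 \<le> k \<Longrightarrow> k + 2 \<le> n \<Longrightarrow> tt I k = tt J k"
  shows "sideE n I = sideE n J"
  by (rule sideE_cong) (use tt_eq_mem[OF assms] in blast)

lemma two_Xq: "2 \<in> Xq n m q s"
  unfolding Xq_def Xc_def by simp

lemma glue:
  assumes "1 \<le> m" "q \<le> m" "s \<le> m" "4*m+3 \<le> n" "2 \<in> I"
    "\<And>k. 2 \<le> k \<Longrightarrow> k \<le> 2*m+1 \<Longrightarrow> tt I k = tL q k"
    "\<And>k. 2*m+2 \<le> k \<Longrightarrow> k + 2 \<le> n \<Longrightarrow> tt I k = tR m s k"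
  shows "sideE n I = sideE n (Xq n m q s)"
proof (rule tt_eq_sideE)
  show "2 \<in> I" "2 \<in> Xq n m q s" using assms two_Xq by auto
  fix k assume k: "2 \<le> k" "k + 2 \<le> n"
  show "tt I k = tt (Xq n m q s) k"
  proof (cases "k \<le> 2*m+1")
    case True then show ?thesis using assms(6)[of k] tt_Xq_L[of m q s n k] assms k by simp
  next
    case False then show ?thesis using assms(7)[of k] tt_Xq_R[of m q s n k] assms k by simp
  qed
qed


lemma nbr_n:
  assumes "1 \<le> m" "q \<le> m" "s \<le> m" "4*m+4 \<le> n" "1 \<le> j" "j < 4*m+1"
  shows "{j,n} \<notin> sideE n (Xq n m q s)"
proof
  assume "{j,n} \<in> sideE n (Xq n m q s)"
  then have h: "(inS n (Xq n m q s) j \<and> inS n (Xq n m q s) n \<and> (\<forall>k. j < k \<and> k < n \<longrightarrow> \<not> inS n (Xq n m q s) k)) \<or>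
     (inS n (-Xq n m q s) j \<and> inS n (-Xq n m q s) n \<and> (\<forall>k. j < k \<and> k < n \<longrightarrow> \<not> inS n (-Xq n m q s) k))"
    using mem_sideE[of j n n "Xq n m q s"] assms by simp
  have a: "n - 1 \<in> Xq n m q s" using memR[of s m q "n-1" n] assms by auto
  have b: "4*m+1 \<notin> Xq n m q s" using memR[of s m q "4*m+1" n] assms by auto
  have c1: "inS n (Xq n m q s) (n-1)" using a unfolding inS_def by simp
  have c2: "inS n (-Xq n m q s) (4*m+1)" using b unfolding inS_def by simp
  from h show False
  proof
    assume h1: "inS n (Xq n m q s) j \<and> inS n (Xq n m q s) n \<and> (\<forall>k. j < k \<and> k < n \<longrightarrow> \<not> inS n (Xq n m q s) k)"
    have "j < n - 1 \<and> n - 1 < n" using assms by auto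
    then show False using h1 c1 by blast
  next
    assume h2: "inS n (-Xq n m q s) j \<and> inS n (-Xq n m q s) n \<and> (\<forall>k. j < k \<and> k < n \<longrightarrow> \<not> inS n (-Xq n m q s) k)"
    have "j < 4*m+1 \<and> 4*m+1 < n" using assms by auto
    then show False using h2 c2 by blast
  qed
qed

definition aq :: "nat \<Rightarrow> nat" where "aq q = (if q = 0 then 2 else 2*q+1)"
definition bs :: "nat \<Rightarrow> nat \<Rightarrow> nat" where "bs m s = (if s = 0 then 4*m+3 else 4*m+4-2 * s)"

lemma aq_in: assumes "1 \<le> m" "q \<le> m" "s \<le> m" "4*m+3 \<le> n" shows "aq q \<in> Xq n m q s"
proof (cases "q = 0")
  case True then show ?thesis using two_Xq unfolding aq_def by simp
next
  case False
  then have "aq q = 2*q+1" unfolding aq_def by simp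
  then show ?thesis using memL[of s m "aq q" n q] assms False by auto
qed

lemma aq_bounds: "q \<le> m \<Longrightarrow> 1 \<le> m \<Longrightarrow> 2 \<le> aq q \<and> aq q \<le> 2*m+1"
  unfolding aq_def by auto

lemma bs_bounds: "s \<le> m \<Longrightarrow> 1 \<le> m \<Longrightarrow> 2*m+4 \<le> bs m s \<and> bs m s \<le> 4*m+3"
  unfolding bs_def by auto

lemma jump_in:
  assumes "1 \<le> m" "q \<le> m" "s \<le> m" "4*m+3 \<le> n"
  shows "{aq q, bs m s} \<in> sideE n (Xq n m q s)"
proof (rule mem_sideE1)
  let ?X = "Xq n m q s"
  show "1 \<le> aq q" "aq q < bs m s" "bs m s \<le> n" using aq_bounds[of q m] bs_bounds[of s m] assms by auto
  show "inS n ?X (aq q)" using aq_in[OF assms] unfolding inS_def by simp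
  show "inS n ?X (bs m s)"
  proof (cases "bs m s = n")
    case True then show ?thesis unfolding inS_def by simp
  next
    case False
    then have "bs m s < n" using bs_bounds[of s m] assms by auto
    moreover have "2*m+2 \<le> bs m s" using bs_bounds[of s m] assms by auto
    ultimately have "bs m s \<in> ?X" using memR[of s m q "bs m s" n] assms unfolding bs_def by (auto split: if_splits)
    then show ?thesis unfolding inS_def by simp
  qed
  show "\<forall>k. aq q < k \<and> k < bs m s \<longrightarrow> \<not> inS n ?X k"
  proof (intro allI impI)
    fix k assume k: "aq q < k \<and> k < bs m s"
    have k3: "3 \<le> k" "k < n" using k aq_bounds[of q m] bs_bounds[of s m] assms by auto
    have "k \<notin> ?X"
    proof (cases "k \<le> 2*m+2")
      case True
      then show ?thesis using memL[of s m k n q] assms k k3 unfolding aq_def by (auto split: if_splits)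
    next
      case False
      then show ?thesis using memR[of s m q k n] assms k k3 unfolding bs_def by (auto split: if_splits)
    qed
    then show "\<not> inS n ?X k" using k3 unfolding inS_def by auto
  qed
qed

lemma jump_out_s:
  assumes "1 \<le> m" "q \<le> m" "s \<le> m" "s2 \<le> m" "4*m+3 \<le> n" "s \<noteq> s2"
  shows "{aq q, bs m s2} \<notin> sideE n (Xq n m q s)"
proof
  let ?X = "Xq n m q s"
  assume "{aq q, bs m s2} \<in> sideE n ?X"
  then have h: "(inS n ?X (aq q) \<and> inS n ?X (bs m s2) \<and> (\<forall>k. aq q < k \<and> k < bs m s2 \<longrightarrow> \<not> inS n ?X k)) \<or>
     (inS n (-?X) (aq q) \<and> inS n (-?X) (bs m s2) \<and> (\<forall>k. aq q < k \<and> k < bs m s2 \<longrightarrow> \<not> inS n (-?X) k))"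
    using mem_sideE[of "aq q" "bs m s2" n ?X] aq_bounds[of q m] bs_bounds[of s2 m] assms by simp
  have a: "\<not> inS n (-?X) (aq q)" using aq_in[OF assms(1,2,3,5)] aq_bounds[of q m] assms unfolding inS_def by auto
  from h show False
  proof
    assume h1: "inS n ?X (aq q) \<and> inS n ?X (bs m s2) \<and> (\<forall>k. aq q < k \<and> k < bs m s2 \<longrightarrow> \<not> inS n ?X k)"
    show False
    proof (cases "s < s2")
      case True
      then have b2: "bs m s2 = 4*m+4-2 * s2" "1 \<le> s2" unfolding bs_def by auto
      have "bs m s2 \<notin> ?X" using memR[of s m q "bs m s2" n] assms b2 True bs_bounds[of s2 m] by auto
      moreover have "bs m s2 \<noteq> 1" "bs m s2 \<noteq> n" using b2 assms by auto
      ultimately show False using h1 unfolding inS_def by auto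
    next
      case False
      then have ss: "s2 < s" using assms by auto
      then have b: "bs m s = 4*m+4-2 * s" "1 \<le> s" unfolding bs_def by auto
      have "bs m s \<in> ?X" using memR[of s m q "bs m s" n] assms b bs_bounds[of s m] by auto
      then have "inS n ?X (bs m s)" unfolding inS_def by simp
      moreover have "aq q < bs m s \<and> bs m s < bs m s2" using aq_bounds[of q m] bs_bounds[of s m] assms b ss unfolding bs_def by auto
      ultimately show False using h1 by blast
    qed
  next
    assume h2: "inS n (-?X) (aq q) \<and> inS n (-?X) (bs m s2) \<and> (\<forall>k. aq q < k \<and> k < bs m s2 \<longrightarrow> \<not> inS n (-?X) k)"
    then show False using a by blast
  qed
qed

lemma jump_out_q:
  assumes "1 \<le> m" "q \<le> m" "q2 \<le> m" "s \<le> m" "4*m+3 \<le> n" "q \<noteq> q2"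
  shows "{aq q, bs m s} \<notin> sideE n (Xq n m q2 s)"
proof
  let ?X = "Xq n m q2 s"
  assume "{aq q, bs m s} \<in> sideE n ?X"
  then have h: "(inS n ?X (aq q) \<and> inS n ?X (bs m s) \<and> (\<forall>k. aq q < k \<and> k < bs m s \<longrightarrow> \<not> inS n ?X k)) \<or>
     (inS n (-?X) (aq q) \<and> inS n (-?X) (bs m s) \<and> (\<forall>k. aq q < k \<and> k < bs m s \<longrightarrow> \<not> inS n (-?X) k))"
    using mem_sideE[of "aq q" "bs m s" n ?X] aq_bounds[of q m] bs_bounds[of s m] assms by simp
  from h show False
  proof
    assume h1: "inS n ?X (aq q) \<and> inS n ?X (bs m s) \<and> (\<forall>k. aq q < k \<and> k < bs m s \<longrightarrow> \<not> inS n ?X k)"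
    show False
    proof (cases "q < q2")
      case True
      have "2*q2+1 \<in> ?X" using memL[of s m "2*q2+1" n q2] assms True by auto
      then have "inS n ?X (2*q2+1)" unfolding inS_def by simp
      moreover have "aq q < 2*q2+1 \<and> 2*q2+1 < bs m s" using bs_bounds[of s m] assms True unfolding aq_def by auto
      ultimately show False using h1 by blast
    next
      case False
      then have qq: "q2 < q" using assms by auto
      have a: "aq q = 2*q+1" using qq unfolding aq_def by simp
      have "aq q \<notin> ?X" using memL[of s m "aq q" n q2] assms a qq by auto
      moreover have "aq q \<noteq> 1" "aq q \<noteq> n" using a assms qq by auto
      ultimately show False using h1 unfolding inS_def by auto
    qed
  next
    assume h2: "inS n (-?X) (aq q) \<and> inS n (-?X) (bs m s) \<and> (\<forall>k. aq q < k \<and> k < bs m s \<longrightarrow> \<not> inS n (-?X) k)"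
    show False
    proof (cases "q = 0")
      case True
      then have "aq q = 2" unfolding aq_def by simp
      moreover have "(2::nat) \<noteq> n" using assms by auto
      ultimately have "\<not> inS n (-?X) (aq q)" using two_Xq[of n m q2 s] unfolding inS_def by simp
      then show False using h2 by blast
    next
      case False
      then have a: "aq q = 2*q+1" unfolding aq_def by auto
      have "2*q+2 \<notin> ?X" using memL[of s m "2*q+2" n q2] assms False by auto
      then have "inS n (-?X) (2*q+2)" unfolding inS_def by simp
      moreover have "aq q < 2*q+2 \<and> 2*q+2 < bs m s" using bs_bounds[of s m] assms a by auto
      ultimately show False using h2 by blast
    qed
  qed
qed


lemma comb:
  assumes m1: "1 \<le> m" and n: "4*m+3 \<le> n" and b: "q \<le> m" "s \<le> m" "q' \<le> m" "s' \<le> m"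
  and I2: "2 \<in> I"
  and sub1: "sideE n (Xq n m q s) \<inter> sideE n (Xq n m q' s') \<subseteq> sideE n I"
  and sub2: "sideE n I \<subseteq> sideE n (Xq n m q s) \<union> sideE n (Xq n m q' s')"
  shows "sideE n I = sideE n (Xq n m q s) \<or> sideE n I = sideE n (Xq n m q' s')"
proof -
  define X where "X = Xq n m q s"
  define Y where "Y = Xq n m q' s'"
  have s1: "sideE n X \<inter> sideE n Y \<subseteq> sideE n I" and s2: "sideE n I \<subseteq> sideE n X \<union> sideE n Y"
    using sub1 sub2 unfolding X_def Y_def by auto
  have A: "tt I k = tt X k" if k: "2 \<le> k" "k + 2 \<le> n" "tt X k = tt Y k" for k
  proof (cases "tt X k")
    case True
    then have "{k, Suc k} \<notin> sideE n X" "{k, Suc k} \<notin> sideE n Y" using R1[OF k(1,2)] k(3) by auto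
    then have "{k, Suc k} \<notin> sideE n I" using s2 by blast
    then show ?thesis using R1[OF k(1,2)] True by auto
  next
    case False
    then have "{k, Suc k} \<in> sideE n X" "{k, Suc k} \<in> sideE n Y" using R1[OF k(1,2)] k(3) by auto
    then have "{k, Suc k} \<in> sideE n I" using s1 by blast
    then show ?thesis using R1[OF k(1,2)] False by auto
  qed
  have B: "\<not>(tt I v \<and> \<not> tt I (Suc v))" if v: "2 \<le> v" "v + 3 \<le> n"
    "\<not>(tt X v \<and> \<not> tt X (Suc v))" "\<not>(tt Y v \<and> \<not> tt Y (Suc v))" for v
  proof
    assume "tt I v \<and> \<not> tt I (Suc v)"
    then obtain j where j: "v+2 < j" "j \<le> n" "{v,j} \<in> sideE n I" using Rup[OF v(1,2)] by blast
    then have "{v,j} \<in> sideE n X \<or> {v,j} \<in> sideE n Y" using s2 by blast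
    then show False using Rup[OF v(1,2), of X] Rup[OF v(1,2), of Y] v j by blast
  qed
  have B': "\<not>(tt I (Suc u) \<and> \<not> tt I u)" if u: "2 \<le> u" "u + 3 \<le> n"
    "\<not>(tt X (Suc u) \<and> \<not> tt X u)" "\<not>(tt Y (Suc u) \<and> \<not> tt Y u)" for u
  proof
    assume "tt I (Suc u) \<and> \<not> tt I u"
    then obtain j where j: "1 \<le> j" "j < u" "{j,u+2} \<in> sideE n I" using Rlow[OF u(1,2)] by blast
    then have "{j,u+2} \<in> sideE n X \<or> {j,u+2} \<in> sideE n Y" using s2 by blast
    then show False using Rlow[OF u(1,2), of X] Rlow[OF u(1,2), of Y] u j by blast
  qed
  have C: "\<not>(tt I k \<and> tt I (Suc k))" if k: "2 \<le> k" "k + 3 \<le> n"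
    "\<not>(tt X k \<and> tt X (Suc k))" "\<not>(tt Y k \<and> tt Y (Suc k))" for k
  proof
    assume "tt I k \<and> tt I (Suc k)"
    then have "{k,k+2} \<in> sideE n I" using R3[OF k(1,2)] by blast
    then have "{k,k+2} \<in> sideE n X \<or> {k,k+2} \<in> sideE n Y" using s2 by blast
    then show False using R3[OF k(1,2), of X] R3[OF k(1,2), of Y] k by blast
  qed
  have D: "\<not>(\<not> tt I 2 \<and> \<not> tt I 3)"
  proof
    assume "\<not> tt I 2 \<and> \<not> tt I 3"
    moreover have e: "Suc 2 = (3::nat)" "Suc 3 = (4::nat)" by simp_all
    ultimately have "3 \<in> I \<and> 4 \<in> I" using I2 unfolding tt_def e by blast
    moreover have n5: "5 \<le> n" using n m1 by auto
    ultimately obtain j where j: "5 \<le> j" "j \<le> n" "{1,j} \<in> sideE n I" using R4[OF I2, of n] by blast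
    then have "{1,j} \<in> sideE n X \<or> {1,j} \<in> sideE n Y" using s2 by blast
    moreover have "4 \<notin> X" "4 \<notin> Y" using memL[of s m 4 n q] memL[of s' m 4 n q'] b m1 unfolding X_def Y_def by auto
    ultimately show False using R4[OF two_Xq[of n m q s] n5] R4[OF two_Xq[of n m q' s'] n5] j
      unfolding X_def Y_def by blast
  qed
  have EH: False if n4: "4*m+4 \<le> n" and allf: "\<forall>k. 2*m+2 \<le> k \<and> k + 2 \<le> n \<longrightarrow> \<not> tt I k"
  proof -
    have cst: "(k \<in> I) = (2*m+2 \<in> I)" if "2*m+2 \<le> k" "k \<le> n - 1" for k
    proof (rule chain_const[of "2*m+2" "n-1" "\<lambda>k. k \<in> I" k])
      fix v assume "2*m+2 \<le> v" "v < n - 1"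
      then have "\<not> tt I v" using allf by auto
      then show "(v \<in> I) = (Suc v \<in> I)" unfolding tt_def by auto
    qed (use that in auto)
    have "\<exists>j. 1 \<le> j \<and> j < 2*m+2 \<and> {j,n} \<in> sideE n I"
    proof (rule R5)
      show "2 \<le> 2*m+2" "2*m+2 < n" using n m1 by auto
      fix k assume "2*m+2 \<le> k" "k < n"
      then show "(k \<in> I) = (2*m+2 \<in> I)" by (intro cst) auto
    qed
    then obtain j where j: "1 \<le> j" "j < 2*m+2" "{j,n} \<in> sideE n I" by blast
    then have "{j,n} \<in> sideE n X \<or> {j,n} \<in> sideE n Y" using s2 by blast
    moreover have "j < 4*m+1" using j m1 by auto
    ultimately show False using nbr_n[of m q s n j] nbr_n[of m q' s' n j] b m1 n4 j unfolding X_def Y_def by blast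
  qed
  have EH': "\<not>(\<forall>k. 2*m+2 \<le> k \<and> k + 2 \<le> n \<longrightarrow> \<not> tt I k)" if "4*m+4 \<le> n"
    using EH that by blast
  have TXL: "tt X k \<longleftrightarrow> tL q k" if "2 \<le> k" "k \<le> 2*m+1" for k
    using tt_Xq_L[of m q s n k] that b m1 n unfolding X_def by blast
  have TYL: "tt Y k \<longleftrightarrow> tL q' k" if "2 \<le> k" "k \<le> 2*m+1" for k
    using tt_Xq_L[of m q' s' n k] that b m1 n unfolding Y_def by blast
  have TXR: "tt X k \<longleftrightarrow> tR m s k" if "2*m+2 \<le> k" "k + 2 \<le> n" for k
    using tt_Xq_R[of m q s n k] that b m1 n unfolding X_def by blast
  have TYR: "tt Y k \<longleftrightarrow> tR m s' k" if "2*m+2 \<le> k" "k + 2 \<le> n" for k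
    using tt_Xq_R[of m q' s' n k] that b m1 n unfolding Y_def by blast
  have A': "tt I k = tt Y k" if "2 \<le> k" "k + 2 \<le> n" "tt Y k = tt X k" for k
    using A[of k] that by auto
  have B2: "\<not>(tt I v \<and> \<not> tt I (Suc v))" if "2 \<le> v" "v + 3 \<le> n"
    "\<not>(tt Y v \<and> \<not> tt Y (Suc v))" "\<not>(tt X v \<and> \<not> tt X (Suc v))" for v
    using B[of v] that by blast
  have B2': "\<not>(tt I (Suc u) \<and> \<not> tt I u)" if "2 \<le> u" "u + 3 \<le> n"
    "\<not>(tt Y (Suc u) \<and> \<not> tt Y u)" "\<not>(tt X (Suc u) \<and> \<not> tt X u)" for u
    using B'[of u] that by blast
  have C2: "\<not>(tt I k \<and> tt I (Suc k))" if "2 \<le> k" "k + 3 \<le> n"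
    "\<not>(tt Y k \<and> tt Y (Suc k))" "\<not>(tt X k \<and> tt X (Suc k))" for k
    using C[of k] that by blast
  have LR: "\<exists>ql. (ql = q \<or> ql = q') \<and> (\<forall>k. 2 \<le> k \<and> k \<le> 2*m+1 \<longrightarrow> tt I k = tL ql k)"
  proof (cases "q = q'")
    case True
    have "\<forall>k. 2 \<le> k \<and> k \<le> 2*m+1 \<longrightarrow> tt I k = tL q k"
      using A TXL TYL True n by auto
    then show ?thesis by blast
  next
    case False
    show ?thesis
    proof (cases "q < q'")
      case True
      have "(\<forall>k. 2 \<le> k \<and> k \<le> 2*m+1 \<longrightarrow> tt I k = tt X k) \<or> (\<forall>k. 2 \<le> k \<and> k \<le> 2*m+1 \<longrightarrow> tt I k = tt Y k)"
        by (rule left_part[OF m1 True b(3) n TXL[unfolded tL_def] TYL[unfolded tL_def] A B B' C D])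
      then show ?thesis using TXL TYL by blast
    next
      case f: False
      then have qq: "q' < q" using False by auto
      have "(\<forall>k. 2 \<le> k \<and> k \<le> 2*m+1 \<longrightarrow> tt I k = tt Y k) \<or> (\<forall>k. 2 \<le> k \<and> k \<le> 2*m+1 \<longrightarrow> tt I k = tt X k)"
        by (rule left_part[OF m1 qq b(1) n TYL[unfolded tL_def] TXL[unfolded tL_def] A' B2 B2' C2 D])
      then show ?thesis using TXL TYL by blast
    qed
  qed
  have RR: "\<exists>sr. (sr = s \<or> sr = s') \<and> (\<forall>k. 2*m+2 \<le> k \<and> k + 2 \<le> n \<longrightarrow> tt I k = tR m sr k)"
  proof (cases "s = s'")
    case True
    have "\<forall>k. 2*m+2 \<le> k \<and> k + 2 \<le> n \<longrightarrow> tt I k = tR m s k"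
    proof (intro allI impI)
      fix k assume k: "2*m+2 \<le> k \<and> k + 2 \<le> n"
      then show "tt I k = tR m s k" using A[of k] TXR[of k] TYR[of k] True m1 by auto
    qed
    then show ?thesis by blast
  next
    case False
    show ?thesis
    proof (cases "s < s'")
      case True
      have "(\<forall>k. 2*m+2 \<le> k \<and> k + 2 \<le> n \<longrightarrow> tt I k = tt X k) \<or> (\<forall>k. 2*m+2 \<le> k \<and> k + 2 \<le> n \<longrightarrow> tt I k = tt Y k)"
        by (rule right_part[OF m1 True b(4) n TXR[unfolded tR_def] TYR[unfolded tR_def] A B B' C EH'])
      then show ?thesis using TXR TYR by blast
    next
      case f: False
      then have ss: "s' < s" using False by auto
      have "(\<forall>k. 2*m+2 \<le> k \<and> k + 2 \<le> n \<longrightarrow> tt I k = tt Y k) \<or> (\<forall>k. 2*m+2 \<le> k \<and> k + 2 \<le> n \<longrightarrow> tt I k = tt X k)"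
        by (rule right_part[OF m1 ss b(2) n TYR[unfolded tR_def] TXR[unfolded tR_def] A' B2 B2' C2 EH'])
      then show ?thesis using TXR TYR by blast
    qed
  qed
  obtain ql where ql: "ql = q \<or> ql = q'" "\<forall>k. 2 \<le> k \<and> k \<le> 2*m+1 \<longrightarrow> tt I k = tL ql k" using LR by blast
  obtain sr where sr: "sr = s \<or> sr = s'" "\<forall>k. 2*m+2 \<le> k \<and> k + 2 \<le> n \<longrightarrow> tt I k = tR m sr k" using RR by blast
  have qlm: "ql \<le> m" "sr \<le> m" using ql(1) sr(1) b by auto
  have EI: "sideE n I = sideE n (Xq n m ql sr)"
    by (rule glue) (use m1 qlm n I2 ql(2) sr(2) in auto)
  show ?thesis
  proof (cases "ql = q")
    case qlq: True
    show ?thesis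
    proof (cases "sr = s")
      case True then show ?thesis using EI qlq by simp
    next
      case srs: False
      then have srs': "sr = s'" "s \<noteq> s'" using sr(1) by auto
      show ?thesis
      proof (cases "q = q'")
        case True then show ?thesis using EI qlq srs' by simp
      next
        case qq: False
        have "{aq q, bs m s'} \<in> sideE n I" using EI qlq srs' jump_in[of m q s' n] m1 b n by simp
        moreover have "{aq q, bs m s'} \<notin> sideE n X" unfolding X_def
          using jump_out_s[of m q s s' n] m1 b n srs' by simp
        moreover have "{aq q, bs m s'} \<notin> sideE n Y" unfolding Y_def
          using jump_out_q[of m q q' s' n] m1 b n qq by simp
        ultimately show ?thesis using s2 by blast
      qed
    qed
  next
    case qlq: False
    then have qlq': "ql = q'" "q \<noteq> q'" using ql(1) by auto
    show ?thesis
    proof (cases "sr = s'")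
      case True then show ?thesis using EI qlq' by simp
    next
      case srs: False
      then have srs': "sr = s" "s \<noteq> s'" using sr(1) by auto
      have "{aq q', bs m s} \<in> sideE n I" using EI qlq' srs' jump_in[of m q' s n] m1 b n by simp
      moreover have "{aq q', bs m s} \<notin> sideE n Y" unfolding Y_def
        using jump_out_s[of m q' s' s n] m1 b n srs' by simp
      moreover have "{aq q', bs m s} \<notin> sideE n X" unfolding X_def
        using jump_out_q[of m q' q s n] m1 b n qlq' by simp
      ultimately show ?thesis using s2 by blast
    qed
  qed
qed


lemma face_lin:
  fixes V :: "'a::real_vector set" and \<phi> :: "'a \<Rightarrow> real"
  assumes fin: "finite V" and lin: "linear \<phi>" and le: "\<And>v. v \<in> V \<Longrightarrow> \<phi> v \<le> M"
  shows "convex hull {v\<in>V. \<phi> v = M} face_of convex hull V"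
proof -
  define W where "W = {v\<in>V. \<phi> v = M}"
  have finW: "finite W" using fin unfolding W_def by simp
  have comb: "\<phi> (\<Sum>x\<in>S. u x *\<^sub>R x) = (\<Sum>x\<in>S. u x * \<phi> x)" for S u
    using linear_sum[OF lin, of "\<lambda>x. u x *\<^sub>R x" S] linear_scale[OF lin] by simp
  have P: "\<phi> x \<le> M \<and> (\<phi> x = M \<longrightarrow> x \<in> convex hull W)" if x: "x \<in> convex hull V" for x
  proof -
    obtain u where u: "\<forall>y\<in>V. 0 \<le> u y" "sum u V = 1" "(\<Sum>y\<in>V. u y *\<^sub>R y) = x"
      using x unfolding convex_hull_finite[OF fin] by blast
    have px: "\<phi> x = (\<Sum>y\<in>V. u y * \<phi> y)" using comb[of u V] u(3) by simp
    have "(\<Sum>y\<in>V. u y * \<phi> y) \<le> (\<Sum>y\<in>V. u y * M)"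
      by (rule sum_mono) (use u(1) le in \<open>auto intro: mult_left_mono\<close>)
    also have "\<dots> = M" using u(2) by (simp add: sum_distrib_right[symmetric])
    finally have le1: "\<phi> x \<le> M" using px by simp
    have "x \<in> convex hull W" if eq: "\<phi> x = M"
    proof -
      have z: "(\<Sum>y\<in>V. u y * (M - \<phi> y)) = 0"
      proof -
        have "(\<Sum>y\<in>V. u y * (M - \<phi> y)) = (\<Sum>y\<in>V. u y * M) - (\<Sum>y\<in>V. u y * \<phi> y)"
          unfolding right_diff_distrib by (rule sum_subtractf)
        also have "\<dots> = 0" using u(2) px eq by (simp add: sum_distrib_right[symmetric])
        finally show ?thesis .
      qed
      have nn: "\<forall>y\<in>V. 0 \<le> u y * (M - \<phi> y)" using u(1) le by auto
      have z0: "\<forall>y\<in>V. u y * (M - \<phi> y) = 0" using sum_nonneg_eq_0_iff[OF fin, of "\<lambda>y. u y * (M - \<phi> y)"] nn z by simp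
      have uz: "u y = 0" if "y \<in> V" "y \<notin> W" for y
      proof -
        have "\<phi> y \<noteq> M" using that unfolding W_def by auto
        then show ?thesis using z0 that(1) by auto
      qed
      have WV: "W \<subseteq> V" unfolding W_def by auto
      have s1: "sum u W = 1"
        using u(2) sum.mono_neutral_left[OF fin WV, of u] uz by auto
      have s2: "(\<Sum>y\<in>W. u y *\<^sub>R y) = x"
        using u(3) sum.mono_neutral_left[OF fin WV, of "\<lambda>y. u y *\<^sub>R y"] uz by auto
      show ?thesis unfolding convex_hull_finite[OF finW] using s1 s2 u(1) WV by blast
    qed
    then show ?thesis using le1 by blast
  qed
  have WV: "W \<subseteq> V" unfolding W_def by auto
  have T: "convex hull W = convex hull V \<inter> {x. \<phi> x = M}"
  proof
    show "convex hull W \<subseteq> convex hull V \<inter> {x. \<phi> x = M}"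
    proof
      fix x assume x: "x \<in> convex hull W"
      then have xV: "x \<in> convex hull V" using hull_mono[OF WV] by blast
      obtain u where u: "\<forall>y\<in>W. 0 \<le> u y" "sum u W = 1" "(\<Sum>y\<in>W. u y *\<^sub>R y) = x"
        using x unfolding convex_hull_finite[OF finW] by blast
      have "\<phi> x = (\<Sum>y\<in>W. u y * \<phi> y)" using comb[of u W] u(3) by simp
      also have "\<dots> = (\<Sum>y\<in>W. u y * M)" unfolding W_def by simp
      also have "\<dots> = M" using u(2) by (simp add: sum_distrib_right[symmetric])
      finally show "x \<in> convex hull V \<inter> {x. \<phi> x = M}" using xV by simp
    qed
  next
    show "convex hull V \<inter> {x. \<phi> x = M} \<subseteq> convex hull W" using P by blast
  qed
  show ?thesis
    unfolding W_def[symmetric] face_of_def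
  proof (intro conjI ballI impI)
    show "convex hull W \<subseteq> convex hull V" using hull_mono[OF WV] .
    show "convex (convex hull W)" by (rule convex_convex_hull)
    fix a b x assume a: "a \<in> convex hull V" and b: "b \<in> convex hull V" and x: "x \<in> convex hull W"
      and seg: "x \<in> open_segment a b"
    obtain u where u: "0 < u" "u < 1" "x = (1 - u) *\<^sub>R a + u *\<^sub>R b" using seg unfolding in_segment by blast
    have pa: "\<phi> a \<le> M" "\<phi> b \<le> M" using P a b by auto
    have px: "\<phi> x = M" using x T by auto
    have "\<phi> x = (1 - u) * \<phi> a + u * \<phi> b"
      using u(3) linear_add[OF lin] linear_scale[OF lin] by simp
    then have "(1 - u) * \<phi> a + u * \<phi> b = M" using px by simp
    then have e0: "(1 - u) * (M - \<phi> a) + u * (M - \<phi> b) = 0" by (simp add: algebra_simps)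
    have h1: "0 \<le> (1 - u) * (M - \<phi> a)" using pa u by simp
    have h2: "0 \<le> u * (M - \<phi> b)" using pa u by simp
    have z1: "(1 - u) * (M - \<phi> a) = 0" using e0 h1 h2 by linarith
    have z2: "u * (M - \<phi> b) = 0" using e0 h1 h2 by linarith
    have "\<phi> a = M \<and> \<phi> b = M" using z1 z2 u(1,2) by auto
    then show "a \<in> convex hull W" "b \<in> convex hull W" using T a b by auto
  qed
qed


definition phiE :: "nat set set \<Rightarrow> nat set set \<Rightarrow> nat set set \<Rightarrow> (nat set \<Rightarrow> real) \<Rightarrow> real" where
  "phiE G A B f = (\<Sum>e\<in>A. f e) - (\<Sum>e\<in>G - B. f e)"

lemma phiE_linear: "linear (phiE G A B)"
proof (rule linearI)
  fix f g :: "nat set \<Rightarrow> real"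
  show "phiE G A B (f + g) = phiE G A B f + phiE G A B g"
    unfolding phiE_def by (simp add: sum.distrib)
  fix r :: real
  show "phiE G A B (r *\<^sub>R f) = r *\<^sub>R phiE G A B f"
    unfolding phiE_def scaleR_fun_def by (simp add: sum_distrib_left right_diff_distrib)
qed

lemma sum_charvec: "finite A \<Longrightarrow> (\<Sum>e\<in>A. charvec T e) = real (card (A \<inter> T))"
  unfolding charvec_def using sum.inter_restrict[of A "\<lambda>_. (1::real)" T] by simp

lemma phiE_charvec:
  assumes "finite G" "A \<subseteq> G"
  shows "phiE G A B (charvec T) = real (card (A \<inter> T)) - real (card ((G - B) \<inter> T))"
  unfolding phiE_def using assms by (simp add: sum_charvec finite_subset)

lemma phiE_le:
  assumes "finite G" "A \<subseteq> G" "T \<subseteq> G"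
  shows "phiE G A B (charvec T) \<le> real (card A)
     \<and> (phiE G A B (charvec T) = real (card A) \<longleftrightarrow> A \<subseteq> T \<and> T \<subseteq> B)"
proof -
  have fA: "finite A" using assms finite_subset by blast
  have c1: "card (A \<inter> T) \<le> card A" using fA by (simp add: card_mono)
  have e1: "card (A \<inter> T) = card A \<longleftrightarrow> A \<subseteq> T"
  proof
    assume "card (A \<inter> T) = card A"
    then have "A \<inter> T = A" using fA by (metis Int_lower1 card_subset_eq)
    then show "A \<subseteq> T" by blast
  next
    assume "A \<subseteq> T" then show "card (A \<inter> T) = card A" by (simp add: Int_absorb2)
  qed
  have e2: "card ((G - B) \<inter> T) = 0 \<longleftrightarrow> T \<subseteq> B"
  proof -
    have f: "finite ((G - B) \<inter> T)" using assms by auto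
    have "card ((G - B) \<inter> T) = 0 \<longleftrightarrow> (G - B) \<inter> T = {}" using f by simp
    also have "\<dots> \<longleftrightarrow> T \<subseteq> B" using assms(3) by auto
    finally show ?thesis .
  qed
  show ?thesis unfolding phiE_charvec[OF assms(1,2)] using c1 e1 e2 by linarith
qed

lemma charvec_inj: "charvec S = charvec T \<Longrightarrow> S = T"
proof -
  assume h: "charvec S = charvec T"
  show "S = T"
  proof (rule set_eqI)
    fix e have "charvec S e = charvec T e" using h by simp
    then show "e \<in> S \<longleftrightarrow> e \<in> T" unfolding charvec_def by (auto split: if_splits)
  qed
qed

lemma face_pair:
  assumes G: "finite G" and PG: "\<And>T. T \<in> P \<Longrightarrow> T \<subseteq> G" and fP: "finite P"
    and x: "x \<in> P" and y: "y \<in> P"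
    and uniq: "\<And>T. T \<in> P \<Longrightarrow> x \<inter> y \<subseteq> T \<Longrightarrow> T \<subseteq> x \<union> y \<Longrightarrow> T = x \<or> T = y"
  shows "convex hull {charvec x, charvec y} face_of convex hull (charvec ` P)"
proof -
  define \<phi> where "\<phi> = phiE G (x \<inter> y) (x \<union> y)"
  have A: "x \<inter> y \<subseteq> G" using PG x by auto
  have le: "\<phi> v \<le> real (card (x \<inter> y))" if vP: "v \<in> charvec ` P" for v
  proof -
    obtain T where T: "T \<in> P" "v = charvec T" using vP by blast
    show ?thesis unfolding \<phi>_def T(2) by (rule conjunct1[OF phiE_le[OF G A PG[OF T(1)]]])
  qed
  have W: "{v \<in> charvec ` P. \<phi> v = real (card (x \<inter> y))} = {charvec x, charvec y}"
  proof
    show "{v \<in> charvec ` P. \<phi> v = real (card (x \<inter> y))} \<subseteq> {charvec x, charvec y}"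
    proof
      fix v assume "v \<in> {v \<in> charvec ` P. \<phi> v = real (card (x \<inter> y))}"
      then obtain T where T: "T \<in> P" "v = charvec T" "\<phi> (charvec T) = real (card (x \<inter> y))" by blast
      have pl: "phiE G (x \<inter> y) (x \<union> y) (charvec T) = real (card (x \<inter> y)) \<longleftrightarrow> x \<inter> y \<subseteq> T \<and> T \<subseteq> x \<union> y"
        by (rule conjunct2[OF phiE_le[OF G A PG[OF T(1)]]])
      have "x \<inter> y \<subseteq> T \<and> T \<subseteq> x \<union> y" using pl T(3) unfolding \<phi>_def by simp
      then have "T = x \<or> T = y" using uniq T(1) by blast
      then show "v \<in> {charvec x, charvec y}" using T(2) by blast
    qed
  next
    have "\<phi> (charvec x) = real (card (x \<inter> y))" "\<phi> (charvec y) = real (card (x \<inter> y))"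
    proof -
      have p1: "phiE G (x \<inter> y) (x \<union> y) (charvec x) = real (card (x \<inter> y)) \<longleftrightarrow> x \<inter> y \<subseteq> x \<and> x \<subseteq> x \<union> y"
        by (rule conjunct2[OF phiE_le[OF G A PG[OF x]]])
      have p2: "phiE G (x \<inter> y) (x \<union> y) (charvec y) = real (card (x \<inter> y)) \<longleftrightarrow> x \<inter> y \<subseteq> y \<and> y \<subseteq> x \<union> y"
        by (rule conjunct2[OF phiE_le[OF G A PG[OF y]]])
      show "\<phi> (charvec x) = real (card (x \<inter> y))" "\<phi> (charvec y) = real (card (x \<inter> y))"
        using p1 p2 unfolding \<phi>_def by auto
    qed
    then show "{charvec x, charvec y} \<subseteq> {v \<in> charvec ` P. \<phi> v = real (card (x \<inter> y))}"
      using x y by blast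
  qed
  show ?thesis
    using face_lin[of "charvec ` P" \<phi> "real (card (x \<inter> y))"] fP le phiE_linear W
    unfolding \<phi>_def by simp
qed

lemma vertex_of:
  assumes G: "finite G" and PG: "\<And>T. T \<in> P \<Longrightarrow> T \<subseteq> G" and fP: "finite P" and x: "x \<in> P"
  shows "charvec x extreme_point_of convex hull (charvec ` P)"
proof -
  have "convex hull {charvec x, charvec x} face_of convex hull (charvec ` P)"
  proof (rule face_pair[OF G PG fP x x])
    fix T assume "T \<in> P" "x \<inter> x \<subseteq> T" "T \<subseteq> x \<union> x"
    then show "T = x \<or> T = x" by blast
  qed
  then have "{charvec x} face_of convex hull (charvec ` P)" by simp
  then show ?thesis using face_of_singleton by blast
qed


lemma Kn_finite: "finite (Kn_edges n)"
proof -
  have "Kn_edges n \<subseteq> Pow {1..n}" unfolding Kn_edges_def by auto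
  then show ?thesis by (rule finite_subset) simp
qed

lemma PT_sub: "T \<in> PT n \<Longrightarrow> T \<subseteq> Kn_edges n"
  using PT_sideE sideE_Kn by blast

lemma PT_finite: "finite (PT n)"
proof -
  have "PT n \<subseteq> Pow (Kn_edges n)" using PT_sub by blast
  then show ?thesis by (rule finite_subset) (simp add: Kn_finite)
qed

lemma tour_Xq: "n \<ge> 3 \<Longrightarrow> tour_of_code n (code_qs m q s) = sideE n (Xq n m q s)"
  unfolding Xq_def by (rule tour_sideE)

lemma tt_sideE_eq:
  assumes "sideE n I = sideE n J" "2 \<le> k" "k + 2 \<le> n"
  shows "tt I k = tt J k"
  using R1[OF assms(2,3), of I] R1[OF assms(2,3), of J] assms(1) by simp

lemma tour_inj:
  assumes m1: "1 \<le> m" and n: "4*m+3 \<le> n" and b: "q \<le> m" "s \<le> m" "q' \<le> m" "s' \<le> m"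
    and eq: "sideE n (Xq n m q s) = sideE n (Xq n m q' s')"
  shows "q = q' \<and> s = s'"
proof -
  have T: "tt (Xq n m q s) k = tt (Xq n m q' s') k" if "2 \<le> k" "k + 2 \<le> n" for k
    using tt_sideE_eq[OF eq that] .
  have qL: "a = c" if ac: "a \<le> m" "c \<le> m" "\<And>k. 2 \<le> k \<Longrightarrow> k \<le> 2*m+1 \<Longrightarrow> tL a k = tL c k" for a c
  proof (rule ccontr)
    assume "a \<noteq> c"
    then have "a < c \<or> c < a" by auto
    then show False
    proof
      assume "a < c"
      then show False using ac(3)[of "2 * c+1"] ac(2) unfolding tL_def by auto
    next
      assume "c < a"
      then show False using ac(3)[of "2 * a+1"] ac(1) unfolding tL_def by auto
    qed
  qed
  have sR: "a = c" if ac: "a \<le> m" "c \<le> m" "\<And>k. 2*m+2 \<le> k \<Longrightarrow> k + 2 \<le> n \<Longrightarrow> tR m a k = tR m c k" for a c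
  proof (rule ccontr)
    assume "a \<noteq> c"
    then have "a < c \<or> c < a" by auto
    then show False
    proof
      assume "a < c"
      then have h: "2*m+2 \<le> 4*m+3-2 * c" "4*m+3-2 * c + 2 \<le> n" "4*m+3-2 * c \<le> 4*m+1"
        "\<not> (4*m+3-2 * a \<le> 4*m+3-2 * c)" using ac(2) n by arith+
      have "4*m+3-2 * c \<noteq> 4*m+2" by presburger
      then show False using ac(3)[OF h(1,2)] h(3,4) unfolding tR_def by auto
    next
      assume "c < a"
      then have h: "2*m+2 \<le> 4*m+3-2 * a" "4*m+3-2 * a + 2 \<le> n" "4*m+3-2 * a \<le> 4*m+1"
        "\<not> (4*m+3-2 * c \<le> 4*m+3-2 * a)" using ac(1) n by arith+
      have "4*m+3-2 * a \<noteq> 4*m+2" by presburger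
      then show False using ac(3)[OF h(1,2)] h(3,4) unfolding tR_def by auto
    qed
  qed
  have "q = q'"
  proof (rule qL[OF b(1) b(3)])
    fix k assume "2 \<le> k" "k \<le> 2*m+1"
    then show "tL q k = tL q' k" using T[of k] tt_Xq_L[of m q s n k] tt_Xq_L[of m q' s' n k] m1 b n by auto
  qed
  moreover have "s = s'"
  proof (rule sR[OF b(2) b(4)])
    fix k assume "2*m+2 \<le> k" "k + 2 \<le> n"
    then show "tR m s k = tR m s' k" using T[of k] tt_Xq_R[of m q s n k] tt_Xq_R[of m q' s' n k] m1 b n by auto
  qed
  ultimately show ?thesis by simp
qed


lemma uniq_tour:
  assumes m1: "1 \<le> m" and n: "4*m+3 \<le> n" and b: "q \<le> m" "s \<le> m" "q' \<le> m" "s' \<le> m"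
    and T: "T \<in> PT n"
    and h1: "tour_of_code n (code_qs m q s) \<inter> tour_of_code n (code_qs m q' s') \<subseteq> T"
    and h2: "T \<subseteq> tour_of_code n (code_qs m q s) \<union> tour_of_code n (code_qs m q' s')"
  shows "T = tour_of_code n (code_qs m q s) \<or> T = tour_of_code n (code_qs m q' s')"
proof -
  obtain I where I: "2 \<in> I" "T = sideE n I" using PT_sideE[OF T] by blast
  have n3: "n \<ge> 3" using n by auto
  show ?thesis
    using comb[OF m1 n b I(1)] h1 h2 unfolding tour_Xq[OF n3] I(2) by blast
qed

theorem mainTheorem8:
  fixes n :: nat
  assumes "n \<ge> 4"
  defines "m \<equiv> (n - 3) div 4"
  defines "Z \<equiv> {tour_of_code n (code_qs m q s) | q s. q \<le> m \<and> s \<le> m}"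
  shows "Z \<subseteq> PT n \<and> card Z = (m + 1)^2 \<and>
         (\<forall>x\<in>Z. \<forall>y\<in>Z. x \<noteq> y \<longrightarrow> skel_adjacent (PYR n) (charvec x) (charvec y)) \<and>
         clique_number (PYR n) \<ge> (m + 1)^2"
proof -
  have n3: "n \<ge> 3" using assms(1) by simp
  have nm: "4*m+3 \<le> n" unfolding m_def using assms(1) by linarith
  define f where "f = (\<lambda>(q,s). tour_of_code n (code_qs m q s))"
  have Zf: "Z = f ` ({..m} \<times> {..m})" unfolding Z_def f_def by auto
  have ZPT: "Z \<subseteq> PT n" unfolding Z_def using tour_in_PT[OF n3] by blast
  have injf: "inj_on f ({..m} \<times> {..m})"
  proof (rule inj_onI)
    fix a b assume a: "a \<in> {..m} \<times> {..m}" and b: "b \<in> {..m} \<times> {..m}" and fe: "f a = f b"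
    obtain q s where qs: "a = (q,s)" by (cases a)
    obtain q' s' where qs': "b = (q',s')" by (cases b)
    show "a = b"
    proof (cases "m = 0")
      case True then show ?thesis using a b qs qs' by auto
    next
      case False
      have "sideE n (Xq n m q s) = sideE n (Xq n m q' s')"
        using fe unfolding f_def qs qs' by (simp add: tour_Xq[OF n3])
      then have "q = q' \<and> s = s'" using tour_inj[of m n q s q' s'] False nm a b qs qs' by auto
      then show ?thesis using qs qs' by simp
    qed
  qed
  have cardZ: "card Z = (m+1)^2"
    unfolding Zf card_image[OF injf] by (simp add: power2_eq_square)
  have finZ: "finite Z" unfolding Zf by simp
  have G: "finite (Kn_edges n)" by (rule Kn_finite)
  have vert: "charvec x \<in> vertices_of (PYR n)" if "x \<in> PT n" for x
    unfolding vertices_of_def PYR_def using vertex_of[OF G PT_sub PT_finite that] by simp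
  have adj: "skel_adjacent (PYR n) (charvec x) (charvec y)" if xy: "x \<in> Z" "y \<in> Z" "x \<noteq> y" for x y
  proof -
    obtain q s where x: "x = tour_of_code n (code_qs m q s)" "q \<le> m" "s \<le> m" using xy(1) unfolding Z_def by blast
    obtain q' s' where y: "y = tour_of_code n (code_qs m q' s')" "q' \<le> m" "s' \<le> m" using xy(2) unfolding Z_def by blast
    have m1: "1 \<le> m"
    proof (rule ccontr)
      assume "\<not> 1 \<le> m" then have "m = 0" by simp
      then show False using x y xy(3) by simp
    qed
    have xP: "x \<in> PT n" "y \<in> PT n" using xy ZPT by auto
    have "convex hull {charvec x, charvec y} face_of convex hull (charvec ` PT n)"
    proof (rule face_pair[OF G PT_sub PT_finite xP])
      fix T assume "T \<in> PT n" "x \<inter> y \<subseteq> T" "T \<subseteq> x \<union> y"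
      then show "T = x \<or> T = y" using uniq_tour[OF m1 nm x(2,3) y(2,3)] x(1) y(1) by blast
    qed
    moreover have "charvec x \<noteq> charvec y" using xy(3) charvec_inj by blast
    ultimately have "convex hull {charvec x, charvec y} face_of PYR n" "charvec x \<noteq> charvec y"
      unfolding PYR_def by simp_all
    then show ?thesis
      unfolding skel_adjacent_def segment_convex_hull using vert xP by simp
  qed
  define C where "C = charvec ` Z"
  have cardC: "card C = (m+1)^2"
  proof -
    have "inj_on charvec Z" using charvec_inj by (meson inj_onI)
    then show ?thesis unfolding C_def using card_image cardZ by metis
  qed
  have cliq: "skel_clique (PYR n) C"
    unfolding skel_clique_def C_def using vert ZPT adj by auto
  have finC: "finite C" unfolding C_def using finZ by simp
  define S where "S = {card C | C. finite C \<and> skel_clique (PYR n) C}"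
  have bound: "k \<le> card (charvec ` PT n)" if kS: "k \<in> S" for k
  proof -
    obtain D where D: "k = card D" "finite D" "skel_clique (PYR n) D" using kS unfolding S_def by blast
    have "D \<subseteq> vertices_of (PYR n)" using D(3) unfolding skel_clique_def by blast
    also have "\<dots> \<subseteq> charvec ` PT n" unfolding vertices_of_def PYR_def
      using extreme_point_of_convex_hull by blast
    finally show ?thesis using D(1) PT_finite by (simp add: card_mono)
  qed
  have finS: "finite S"
  proof -
    have "S \<subseteq> {..card (charvec ` PT n)}" using bound by auto
    then show ?thesis by (rule finite_subset) simp
  qed
  have inS: "(m+1)^2 \<in> S" unfolding S_def using cardC[symmetric] finC cliq by blast
  have "clique_number (PYR n) \<ge> (m+1)^2"
    unfolding clique_number_def S_def[symmetric] using Max_ge[OF finS inS] .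
  then show ?thesis using ZPT cardZ adj by blast
qed


end
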